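(* Suppose that OnlinePacker (described in the context) has packed n horizontal parallelograms of height 1 and width at most 1. If the total area of the pieces is at least 1, the resulting packing has density Ω(n^{1-log 3}/log n), where log is base 2.
   Context: Setting: online translational strip packing. The strip is a horizontal strip of height 1, bounded on the left by a vertical segment and unbounded to the right. Pieces arrive one at a time, each must be placed by a translation only, interior-disjoint from previously placed pieces, before the next piece is revealed. The occupied part of the strip is the part from its left end to the vertical line through the rightmost point of a placed piece; density is total piece area divided by the area of the occupied part. Here all pieces are horizontal parallelograms (parallelograms with a pair of horizontal edges) of height 1 and width at most 1. Box types: these form an infinite ternary tree. The root, the basic box type, is a 2 x 1 rectangle. A d-dimensional box type is a vector [x_1,...,x_d] in {-1,0,+1}^d and is a horizontal parallelogram of height 1. Given type T with bottom edge b and top edge t, split b into three equal consecutive segments b_{-1}, b_0, b_{+1} and t likewise into t_{-1}, t_0, t_{+1}; the child type T ⊕ [x_{d+1}] is the parallelogram spanned by b_0 and t_{x_{d+1}}. Thus a d-dimensional type has base edges of length 2·3^{-d}. A box type T matches a piece P if P can be packed into T and area(T) ≤ 6·area(P). A type is suitable for P if it is an ancestor (including itself) of a type matching P. Algorithm OnlinePacker: each allocated box of type T contains either a single piece that T matches, or one, two or three boxes whose types are children of T. When a piece P arrives: if there is an allocated box B_1 whose type T_1 is suitable for P (with T_1,...,T_k the tree path from T_1 to a type T_k matching P) and B_1 has room for one more box of type T_2, choose such B_1 of maximum dimension; then for i = 1,...,k-1 allocate in B_i a new box B_{i+1} of type T_{i+1}, as far left in B_i as possible, and place P in B_k. Otherwise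 allocate a new basic box as far left in the strip as possible, call it B_1, and proceed the same way. A d-dimensional box is near-empty if exactly one (d+1)-dimensional box is allocated in it (near-empty boxes may be present here). *)

theory Defs
  imports "HOL-Analysis.Analysis"
begin

definition hpar :: "real \<Rightarrow> real \<Rightarrow> real \<Rightarrow> (real \<times> real) set" where
  "hpar a w s = {(x, y). 0 \<le> y \<and> y \<le> 1 \<and> a + s * y \<le> x \<and> x \<le> a + s * y + w}"

definition is_hpar1 :: "(real \<times> real) set \<Rightarrow> bool" where
  "is_hpar1 P \<longleftrightarrow> (\<exists>a b w s. w > 0 \<and>
     P = {(x, y). b \<le> y \<and> y \<le> b + 1 \<and> a + s * (y - b) \<le> x \<and> x \<le> a + s * (y - b) + w})"

definition width :: "(real \<times> real) set \<Rightarrow> real" where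
  "width P = (SUP p\<in>P. fst p) - (INF p\<in>P. fst p)"

definition area :: "(real \<times> real) set \<Rightarrow> real" where
  "area A = measure lebesgue A"

definition transl :: "real \<times> real \<Rightarrow> (real \<times> real) set \<Rightarrow> (real \<times> real) set" where
  "transl v A = (\<lambda>p. v + p) ` A"

definition int_disjoint :: "(real \<times> real) set \<Rightarrow> (real \<times> real) set \<Rightarrow> bool" where
  "int_disjoint A B \<longleftrightarrow> interior A \<inter> interior B = {}"

definition strip :: "(real \<times> real) set" where
  "strip = {(x, y). 0 \<le> x \<and> 0 \<le> y \<and> y \<le> 1}"

text \<open>A type is a list in {-1,0,1}^d.  Parameters (bottom-left x-coordinate, edge length,
  top offset) of the parallelogram representing it: the root is the 2 x 1 rectangle;
  the child T \<oplus> [x] is spanned by the middle third b_0 of the bottom edge and the third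
  t_x of the top edge.\<close>
definition child_params :: "real \<times> real \<times> real \<Rightarrow> int \<Rightarrow> real \<times> real \<times> real" where
  "child_params p x = (case p of (a, L, s) \<Rightarrow> (a + L / 3, L / 3, s + real_of_int x * L / 3))"

definition type_params :: "int list \<Rightarrow> real \<times> real \<times> real" where
  "type_params T = foldl child_params (0, 2, 0) T"

definition box_type :: "int list \<Rightarrow> (real \<times> real) set" where
  "box_type T = (case type_params T of (a, L, s) \<Rightarrow> hpar a L s)"

definition is_child_type :: "int list \<Rightarrow> int list \<Rightarrow> bool" where
  "is_child_type T T' \<longleftrightarrow> (\<exists>x\<in>{-1, 0, 1}. T' = T @ [x])"

definition valid_type :: "int list \<Rightarrow> bool" where
  "valid_type T \<longleftrightarrow> set T \<subseteq> {-1, 0, 1}"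

definition matches :: "int list \<Rightarrow> (real \<times> real) set \<Rightarrow> bool" where
  "matches T P \<longleftrightarrow> valid_type T \<and> (\<exists>v. transl v P \<subseteq> box_type T) \<and> area (box_type T) \<le> 6 * area P"

definition suitable :: "int list \<Rightarrow> (real \<times> real) set \<Rightarrow> bool" where
  "suitable T P \<longleftrightarrow> (\<exists>R. matches (T @ R) P)"

definition path_to_match :: "int list \<Rightarrow> int list list \<Rightarrow> (real \<times> real) set \<Rightarrow> bool" where
  "path_to_match T1 Ts P \<longleftrightarrow> Ts \<noteq> [] \<and> hd Ts = T1 \<and>
     (\<forall>j. Suc j < length Ts \<longrightarrow> is_child_type (Ts ! j) (Ts ! Suc j)) \<and> matches (last Ts) P"

text \<open>An allocated box: its type, the translation vector placing the canonical type
  parallelogram, and the index of its parent box (None for basic boxes).  A placed piece: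
  the translated piece and the index of the box containing it.\<close>
record pstate =
  boxes :: "(int list \<times> (real \<times> real) \<times> nat option) list"
  pcs :: "((real \<times> real) set \<times> nat) list"

definition empty_state :: pstate where
  "empty_state = \<lparr>boxes = [], pcs = []\<rparr>"

definition btype :: "pstate \<Rightarrow> nat \<Rightarrow> int list" where
  "btype S i = fst (boxes S ! i)"

definition bparent :: "pstate \<Rightarrow> nat \<Rightarrow> nat option" where
  "bparent S i = snd (snd (boxes S ! i))"

definition breg :: "pstate \<Rightarrow> nat \<Rightarrow> (real \<times> real) set" where
  "breg S i = transl (fst (snd (boxes S ! i))) (box_type (btype S i))"

definition has_piece :: "pstate \<Rightarrow> nat \<Rightarrow> bool" where
  "has_piece S i \<longleftrightarrow> (\<exists>Q. (Q, i) \<in> set (pcs S))"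

definition add_box :: "pstate \<Rightarrow> int list \<times> (real \<times> real) \<times> nat option \<Rightarrow> pstate" where
  "add_box S b = S\<lparr>boxes := boxes S @ [b]\<rparr>"

definition fits_child :: "pstate \<Rightarrow> nat \<Rightarrow> int list \<Rightarrow> real \<times> real \<Rightarrow> bool" where
  "fits_child S i T v \<longleftrightarrow> transl v (box_type T) \<subseteq> breg S i \<and>
     (\<forall>j < length (boxes S). bparent S j = Some i \<longrightarrow> int_disjoint (transl v (box_type T)) (breg S j))"

definition leftmost_child :: "pstate \<Rightarrow> nat \<Rightarrow> int list \<Rightarrow> real \<times> real \<Rightarrow> bool" where
  "leftmost_child S i T v \<longleftrightarrow> fits_child S i T v \<and> (\<forall>u. fits_child S i T u \<longrightarrow> fst v \<le> fst u)"

definition fits_basic :: "pstate \<Rightarrow> real \<times> real \<Rightarrow> bool" where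
  "fits_basic S v \<longleftrightarrow> transl v (box_type []) \<subseteq> strip \<and>
     (\<forall>j < length (boxes S). bparent S j = None \<longrightarrow> int_disjoint (transl v (box_type [])) (breg S j))"

definition leftmost_basic :: "pstate \<Rightarrow> real \<times> real \<Rightarrow> bool" where
  "leftmost_basic S v \<longleftrightarrow> fits_basic S v \<and> (\<forall>u. fits_basic S u \<longrightarrow> fst v \<le> fst u)"

inductive alloc_chain :: "pstate \<Rightarrow> nat \<Rightarrow> int list list \<Rightarrow> pstate \<Rightarrow> nat \<Rightarrow> bool" where
  nil: "alloc_chain S i [] S i"
| cons: "leftmost_child S i T v \<Longrightarrow>
         alloc_chain (add_box S (T, v, Some i)) (length (boxes S)) Ts S' j \<Longrightarrow>
         alloc_chain S i (T # Ts) S' j"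

definition place :: "pstate \<Rightarrow> nat \<Rightarrow> (real \<times> real) set \<Rightarrow> pstate \<Rightarrow> bool" where
  "place S j P S' \<longleftrightarrow> (\<exists>v. transl v P \<subseteq> breg S j \<and>
     S' = S\<lparr>pcs := pcs S @ [(transl v P, j)]\<rparr>)"

definition existing_ok :: "pstate \<Rightarrow> (real \<times> real) set \<Rightarrow> nat \<Rightarrow> int list list \<Rightarrow> bool" where
  "existing_ok S P i Ts \<longleftrightarrow> i < length (boxes S) \<and> path_to_match (btype S i) Ts P \<and>
     length Ts \<ge> 2 \<and> \<not> has_piece S i \<and> (\<exists>v. fits_child S i (Ts ! 1) v)"

text \<open>One step of OnlinePacker on the arriving piece P (ties are resolved arbitrarily).\<close>
definition op_step :: "pstate \<Rightarrow> (real \<times> real) set \<Rightarrow> pstate \<Rightarrow> bool" where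
  "op_step S P S' \<longleftrightarrow>
     (\<exists>i Ts. existing_ok S P i Ts \<and>
        (\<forall>i' Ts'. existing_ok S P i' Ts' \<longrightarrow> length (btype S i') \<le> length (btype S i)) \<and>
        (\<exists>S1 j. alloc_chain S i (tl Ts) S1 j \<and> place S1 j P S'))
   \<or> ((\<nexists>i Ts. existing_ok S P i Ts) \<and>
        (\<exists>v Ts S1 j. leftmost_basic S v \<and> path_to_match [] Ts P \<and>
           alloc_chain (add_box S ([], v, None)) (length (boxes S)) (tl Ts) S1 j \<and>
           place S1 j P S'))"

inductive packs :: "(real \<times> real) set list \<Rightarrow> pstate \<Rightarrow> bool" where
  init: "packs [] empty_state"
| step: "packs ps S \<Longrightarrow> op_step S P S' \<Longrightarrow> packs (ps @ [P]) S'"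

definition placed :: "pstate \<Rightarrow> (real \<times> real) set list" where
  "placed S = map fst (pcs S)"

definition occ_right :: "pstate \<Rightarrow> real" where
  "occ_right S = Max ((\<lambda>Q. SUP p\<in>Q. fst p) ` set (placed S))"

definition occupied :: "pstate \<Rightarrow> (real \<times> real) set" where
  "occupied S = {(x, y). 0 \<le> x \<and> x \<le> occ_right S \<and> 0 \<le> y \<and> y \<le> 1}"

definition pack_density :: "pstate \<Rightarrow> real" where
  "pack_density S = sum_list (map area (placed S)) / area (occupied S)"

end

theory Submission
  imports Defs
begin

lemma closed_hpar: "closed (hpar a L s)"
proof -
  have "hpar a L s = {p. 0 \<le> snd p} \<inter> {p. snd p \<le> 1} \<inter> {p. a + s * snd p \<le> fst p} \<inter> {p. fst p \<le> a + s * snd p + L}"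
    by (auto simp: hpar_def)
  moreover have "closed \<dots>"
    by (intro closed_Int closed_Collect_le continuous_intros)
  ultimately show ?thesis by simp
qed

lemma area_hpar: assumes "L \<ge> 0" shows "area (hpar a L s) = L"
proof -
  let ?H = "hpar a L s"
  have B: "?H \<in> sets borel" using closed_hpar by (simp add: borel_closed)
  have "emeasure lborel ?H = emeasure (lborel \<Otimes>\<^sub>M lborel) ?H" by (simp add: lborel_prod)
  also have "\<dots> = (\<integral>\<^sup>+y. emeasure lborel ((\<lambda>x. (x, y)) -` ?H) \<partial>lborel)"
  proof (rule lborel_pair.emeasure_pair_measure_alt2)
    show "?H \<in> sets (lborel \<Otimes>\<^sub>M lborel)" unfolding lborel_prod using B by simp
  qed
  also have "\<dots> = (\<integral>\<^sup>+(y::real). ennreal L * (indicator {0..1} y :: ennreal) \<partial>lborel)"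
  proof -
    have "emeasure lborel ((\<lambda>x. (x, y)) -` ?H) = ennreal L * (indicator {0..1} y :: ennreal)" for y :: real
    proof (cases "0 \<le> y \<and> y \<le> 1")
      case True
      then have "(\<lambda>x. (x, y)) -` ?H = {a + s*y .. a + s*y + L}" by (auto simp: hpar_def)
      then show ?thesis using True assms by (simp add: indicator_def)
    next
      case False
      then have "(\<lambda>x. (x, y)) -` ?H = {}" by (auto simp: hpar_def)
      then show ?thesis using False by (simp add: indicator_def)
    qed
    then show ?thesis by simp
  qed
  also have "\<dots> = ennreal L" by (simp add: nn_integral_cmult)
  finally have "emeasure lborel ?H = ennreal L" .
  then have "measure lborel ?H = L" using assms by (simp add: measure_def)
  then show ?thesis unfolding area_def using B by simp
qed


definition gp :: "real \<Rightarrow> real \<Rightarrow> real \<Rightarrow> real \<Rightarrow> (real \<times> real) set" where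
  "gp a b w s = {(x, y). b \<le> y \<and> y \<le> b + 1 \<and> a + s * (y - b) \<le> x \<and> x \<le> a + s * (y - b) + w}"

lemma transl_hpar: "transl u (hpar a w s) = gp (a + fst u) (snd u) w s"
proof (cases u)
  case (Pair u1 u2)
  show ?thesis
  proof (rule set_eqI, rule iffI)
    fix z assume "z \<in> transl u (hpar a w s)"
    then obtain x y where xy: "(x, y) \<in> hpar a w s" "z = u + (x, y)" unfolding transl_def by auto
    then show "z \<in> gp (a + fst u) (snd u) w s" using Pair by (auto simp: hpar_def gp_def algebra_simps)
  next
    fix z assume z: "z \<in> gp (a + fst u) (snd u) w s"
    obtain X Y where XY: "z = (X, Y)" by (cases z)
    have "(X - u1, Y - u2) \<in> hpar a w s" using z XY Pair by (auto simp: hpar_def gp_def algebra_simps)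
    moreover have "z = u + (X - u1, Y - u2)" using XY Pair by simp
    ultimately show "z \<in> transl u (hpar a w s)" unfolding transl_def by blast
  qed
qed

lemma gp_sub:
  assumes "a2 \<le> a1" "a2 + s2 \<le> a1 + s1" "a1 + w1 \<le> a2 + w2" "a1 + s1 + w1 \<le> a2 + s2 + w2"
  shows "gp a1 b w1 s1 \<subseteq> gp a2 b w2 s2"
proof
  fix z assume z: "z \<in> gp a1 b w1 s1"
  obtain x y where xy: "z = (x, y)" by (cases z)
  define t where "t = y - b"
  have t: "0 \<le> t" "t \<le> 1" using z xy by (auto simp: gp_def t_def)
  have e1: "(a1 + s1 * t) - (a2 + s2 * t) = (1 - t) * (a1 - a2) + t * ((a1 + s1) - (a2 + s2))"
    by (simp add: algebra_simps)
  have "(1 - t) * (a1 - a2) \<ge> 0" "t * ((a1 + s1) - (a2 + s2)) \<ge> 0" using t assms by auto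
  then have i1: "a2 + s2 * t \<le> a1 + s1 * t" using e1 by linarith
  have e2: "(a2 + s2 * t + w2) - (a1 + s1 * t + w1) = (1 - t) * ((a2 + w2) - (a1 + w1)) + t * ((a2 + s2 + w2) - (a1 + s1 + w1))"
    by (simp add: algebra_simps)
  have "(1 - t) * ((a2 + w2) - (a1 + w1)) \<ge> 0" "t * ((a2 + s2 + w2) - (a1 + s1 + w1)) \<ge> 0" using t assms by auto
  then have i2: "a1 + s1 * t + w1 \<le> a2 + s2 * t + w2" using e2 by linarith
  show "z \<in> gp a2 b w2 s2" using z xy i1 i2 by (auto simp: gp_def t_def)
qed

lemma gp_sub_nec:
  assumes "w1 \<ge> 0" "gp a1 b1 w1 s1 \<subseteq> gp a2 b2 w2 s2"
  shows "b1 = b2 \<and> a2 \<le> a1 \<and> a2 + s2 \<le> a1 + s1 \<and> a1 + w1 \<le> a2 + w2 \<and> a1 + s1 + w1 \<le> a2 + s2 + w2"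
proof -
  have p1: "(a1, b1) \<in> gp a2 b2 w2 s2" using assms by (intro subsetD[OF assms(2)]) (auto simp: gp_def)
  have p2: "(a1 + w1, b1) \<in> gp a2 b2 w2 s2" using assms by (intro subsetD[OF assms(2)]) (auto simp: gp_def)
  have p3: "(a1 + s1, b1 + 1) \<in> gp a2 b2 w2 s2" using assms by (intro subsetD[OF assms(2)]) (auto simp: gp_def)
  have p4: "(a1 + s1 + w1, b1 + 1) \<in> gp a2 b2 w2 s2" using assms by (intro subsetD[OF assms(2)]) (auto simp: gp_def)
  have b: "b1 = b2" using p1 p3 by (auto simp: gp_def)
  show ?thesis using p1 p2 p3 p4 b by (auto simp: gp_def)
qed

lemma int_disj_sep:
  assumes A: "A \<subseteq> {p. fst p - s * snd p \<le> c}" and B: "B \<subseteq> {p. fst p - s * snd p \<ge> c}"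
  shows "int_disjoint A B"
proof (rule ccontr)
  assume "\<not> int_disjoint A B"
  then obtain z where z: "z \<in> interior A \<inter> interior B" unfolding int_disjoint_def by blast
  have "open (interior A \<inter> interior B)" by auto
  then obtain e where e: "e > 0" "ball z e \<subseteq> interior A \<inter> interior B" using z open_contains_ball by blast
  obtain z1 z2 where zz: "z = (z1, z2)" by (cases z)
  have "dist z (z1 + e/2, z2) = e/2" using zz e by (simp add: dist_Pair_Pair dist_real_def)
  then have "(z1 + e/2, z2) \<in> interior A \<inter> interior B" using e by auto
  then have w: "(z1 + e/2, z2) \<in> A \<inter> B" using interior_subset by blast
  have "z \<in> A \<inter> B" using z interior_subset by blast
  then have "z1 - s * z2 \<ge> c" using B zz by auto
  moreover have "z1 + e/2 - s * z2 \<le> c" using w A by auto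
  ultimately show False using e by linarith
qed

lemma gp_disj:
  assumes "a' \<ge> a + w"
  shows "int_disjoint (gp a' b w' s) (gp a b w s)" "int_disjoint (gp a b w s) (gp a' b w' s)"
proof -
  have 1: "gp a b w s \<subseteq> {p. fst p - s * snd p \<le> a + w - s * b}" by (auto simp: gp_def algebra_simps)
  have 2: "gp a' b w' s \<subseteq> {p. fst p - s * snd p \<ge> a + w - s * b}" using assms by (auto simp: gp_def algebra_simps)
  show "int_disjoint (gp a b w s) (gp a' b w' s)" by (rule int_disj_sep[OF 1 2])
  then show "int_disjoint (gp a' b w' s) (gp a b w s)" by (auto simp: int_disjoint_def)
qed

lemma tp_snoc: "type_params (T @ [x]) = child_params (type_params T) x"
  by (simp add: type_params_def)

lemma tp_L: "fst (snd (type_params T)) = 2 / 3 ^ length T"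
proof (induction T rule: rev_induct)
  case Nil then show ?case by (simp add: type_params_def)
next
  case (snoc x T)
  obtain a L s where "type_params T = (a, L, s)" by (cases "type_params T")
  then show ?case using snoc by (simp add: tp_snoc child_params_def)
qed

lemma area_box_type: "area (box_type T) = 2 / 3 ^ length T"
proof -
  obtain a L s where tp: "type_params T = (a, L, s)" by (cases "type_params T")
  have "L = 2 / 3 ^ length T" using tp_L[of T] tp by simp
  then show ?thesis using tp by (simp add: box_type_def area_hpar)
qed

lemma add_box_simps[simp]:
  "boxes (add_box S b) = boxes S @ [b]" "pcs (add_box S b) = pcs S"
  by (simp_all add: add_box_def)

lemma add_box_old:
  assumes "k < length (boxes S)"
  shows "btype (add_box S b) k = btype S k" "bparent (add_box S b) k = bparent S k"
    "breg (add_box S b) k = breg S k"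
  using assms by (simp_all add: btype_def bparent_def breg_def nth_append)

lemma add_box_new:
  "btype (add_box S b) (length (boxes S)) = fst b"
  "bparent (add_box S b) (length (boxes S)) = snd (snd b)"
  "breg (add_box S b) (length (boxes S)) = transl (fst (snd b)) (box_type (fst b))"
  by (simp_all add: btype_def bparent_def breg_def)

lemma room:
  assumes lm: "leftmost_child S p T' v" and T': "T' = btype S p @ [x]" and x: "x \<in> {-1, 0, 1}"
    and noch: "\<forall>j<length (boxes S). bparent S j \<noteq> Some p" and pm: "p < length (boxes S)"
  shows "\<exists>u. fits_child (add_box S (T', v, Some p)) p T' u"
proof -
  obtain a L s where tp: "type_params (btype S p) = (a, L, s)" by (cases "type_params (btype S p)")
  have L: "L > 0" using tp_L[of "btype S p"] tp by simp
  obtain t1 t2 where t: "fst (snd (boxes S ! p)) = (t1, t2)" by (cases "fst (snd (boxes S ! p))")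
  have bp: "breg S p = gp (a + t1) t2 L s" using tp t by (simp add: breg_def box_type_def transl_hpar)
  have bt: "box_type T' = hpar (a + L/3) (L/3) (s + real_of_int x * L / 3)"
    using tp T' by (simp add: box_type_def tp_snoc child_params_def)
  have fitsS: "fits_child S p T' u \<longleftrightarrow> gp (a + L/3 + fst u) (snd u) (L/3) (s + real_of_int x * L / 3) \<subseteq> gp (a + t1) t2 L s" for u
    using noch bp bt by (simp add: fits_child_def transl_hpar)
  obtain v1 v2 where v: "v = (v1, v2)" by (cases v)
  have "fits_child S p T' v" using lm by (simp add: leftmost_child_def)
  then have nec: "v2 = t2 \<and> a + t1 \<le> a + L/3 + v1 \<and> a + t1 + s \<le> a + L/3 + v1 + (s + real_of_int x * L / 3)
     \<and> a + L/3 + v1 + L/3 \<le> a + t1 + L \<and> a + L/3 + v1 + (s + real_of_int x * L / 3) + L/3 \<le> a + t1 + s + L"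
  proof -
    have "gp (a + L/3 + v1) v2 (L/3) (s + real_of_int x * L / 3) \<subseteq> gp (a + t1) t2 L s"
      using \<open>fits_child S p T' v\<close> fitsS[of v] v by simp
    from gp_sub_nec[OF _ this] L show ?thesis by simp
  qed
  define d0 where "d0 = (if x = -1 then 0 else - L/3)"
  have "fits_child S p T' (t1 + d0, t2)"
    unfolding fitsS fst_conv snd_conv by (rule gp_sub) (use x L in \<open>auto simp: d0_def\<close>)
  then have "v1 \<le> t1 + d0" using lm v by (auto simp: leftmost_child_def)
  then have v1: "v1 = t1 + d0" using nec x L by (auto simp: d0_def)
  let ?S' = "add_box S (T', v, Some p)"
  let ?m = "length (boxes S)"
  have c1: "transl (v1 + L/3, t2) (box_type T') \<subseteq> breg ?S' p"
  proof -
    have e1: "breg ?S' p = gp (a + t1) t2 L s" using add_box_old(3)[OF pm] bp by simp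
    have e2: "transl (v1 + L/3, t2) (box_type T') = gp (a + L/3 + (v1 + L/3)) t2 (L/3) (s + real_of_int x * L / 3)"
      using bt by (simp add: transl_hpar)
    show ?thesis unfolding e1 e2 by (rule gp_sub) (use x L v1 in \<open>auto simp: d0_def\<close>)
  qed
  have c2: "int_disjoint (transl (v1 + L/3, t2) (box_type T')) (breg ?S' j)"
    if "j < length (boxes ?S')" "bparent ?S' j = Some p" for j
  proof -
    have "j = ?m"
    proof (rule ccontr)
      assume "j \<noteq> ?m"
      then have "j < ?m" using that(1) by simp
      then show False using that(2) noch add_box_old(2)[of j S "(T', v, Some p)"] by simp
    qed
    then have "breg ?S' j = gp (a + L/3 + v1) t2 (L/3) (s + real_of_int x * L / 3)"
      using add_box_new(3)[of S] bt v nec by (simp add: transl_hpar)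
    then show ?thesis using bt by (simp add: transl_hpar gp_disj)
  qed
  show ?thesis using c1 c2 unfolding fits_child_def by blast
qed


definition nbasic :: "pstate \<Rightarrow> nat" where
  "nbasic S = length (filter (\<lambda>b. snd (snd b) = None) (boxes S))"

definition LI :: "pstate \<Rightarrow> bool" where
  "LI S \<longleftrightarrow>
    (\<forall>i<length (boxes S). valid_type (btype S i) \<and>
       (case bparent S i of None \<Rightarrow> btype S i = [] | Some p \<Rightarrow> p < i \<and> is_child_type (btype S p) (btype S i)))
  \<and> (\<forall>i<length (boxes S). breg S i \<subseteq> {p. 0 \<le> fst p \<and> fst p \<le> 2 * real (nbasic S)})
  \<and> (\<forall>i c. c < length (boxes S) \<and> bparent S c = Some i \<and>
       (\<forall>c'<length (boxes S). bparent S c' = Some i \<longrightarrow> c' = c) \<longrightarrow> (\<exists>u. fits_child S i (btype S c) u))"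

lemma LI_1: "LI S \<Longrightarrow> \<forall>i<length (boxes S). valid_type (btype S i) \<and>
       (case bparent S i of None \<Rightarrow> btype S i = [] | Some p \<Rightarrow> p < i \<and> is_child_type (btype S p) (btype S i))"
  unfolding LI_def by (elim conjE)
lemma LI_2: "LI S \<Longrightarrow> \<forall>i<length (boxes S). breg S i \<subseteq> {p. 0 \<le> fst p \<and> fst p \<le> 2 * real (nbasic S)}"
  unfolding LI_def by (elim conjE)
lemma LI_3: "LI S \<Longrightarrow> \<forall>i c. c < length (boxes S) \<and> bparent S c = Some i \<and>
       (\<forall>c'<length (boxes S). bparent S c' = Some i \<longrightarrow> c' = c) \<longrightarrow> (\<exists>u. fits_child S i (btype S c) u)"
  unfolding LI_def by (elim conjE)

lemma fits_add:
  assumes "i' < length (boxes S)" "snd (snd b) \<noteq> Some i'"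
  shows "fits_child (add_box S b) i' T u \<longleftrightarrow> fits_child S i' T u"
proof -
  have "(\<forall>j<length (boxes (add_box S b)). bparent (add_box S b) j = Some i' \<longrightarrow> int_disjoint (transl u (box_type T)) (breg (add_box S b) j))
     \<longleftrightarrow> (\<forall>j<length (boxes S). bparent S j = Some i' \<longrightarrow> int_disjoint (transl u (box_type T)) (breg S j))"
    using assms by (auto simp: less_Suc_eq add_box_old add_box_new)
  then show ?thesis using assms by (simp add: fits_child_def add_box_old)
qed

lemma nbasic_add: "nbasic (add_box S b) = nbasic S + (if snd (snd b) = None then 1 else 0)"
  by (simp add: nbasic_def)

lemma LI_add_child:
  assumes LI: "LI S" and lm: "leftmost_child S i T v" and im: "i < length (boxes S)"
    and ch: "is_child_type (btype S i) T"
  shows "LI (add_box S (T, v, Some i))"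
proof -
  let ?S' = "add_box S (T, v, Some i)"
  let ?m = "length (boxes S)"
  note L1 = LI_1[OF LI] and L2 = LI_2[OF LI] and L3 = LI_3[OF LI]
  obtain x where x: "x \<in> {-1, 0, 1}" "T = btype S i @ [x]" using ch unfolding is_child_type_def by blast
  have fc: "fits_child S i T v" using lm by (simp add: leftmost_child_def)
  have nb: "nbasic ?S' = nbasic S" by (simp add: nbasic_add)
  have P1: "valid_type (btype ?S' k) \<and>
       (case bparent ?S' k of None \<Rightarrow> btype ?S' k = [] | Some p \<Rightarrow> p < k \<and> is_child_type (btype ?S' p) (btype ?S' k))"
    if k: "k < length (boxes ?S')" for k
  proof (cases "k < ?m")
    case True
    have "valid_type (btype S k) \<and>
       (case bparent S k of None \<Rightarrow> btype S k = [] | Some p \<Rightarrow> p < k \<and> is_child_type (btype S p) (btype S k))"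
      using L1 True by blast
    then show ?thesis using True by (auto simp: add_box_old split: option.splits)
  next
    case False
    then have k: "k = ?m" using k by simp
    have "valid_type T" using L1 im x unfolding valid_type_def by auto
    then show ?thesis using k im ch by (simp add: add_box_new add_box_old)
  qed
  have P2: "breg ?S' k \<subseteq> {p. 0 \<le> fst p \<and> fst p \<le> 2 * real (nbasic ?S')}" if k: "k < length (boxes ?S')" for k
  proof (cases "k < ?m")
    case True
    have "breg S k \<subseteq> {p. 0 \<le> fst p \<and> fst p \<le> 2 * real (nbasic S)}" using L2[rule_format, OF True] .
    then show ?thesis using nb add_box_old(3)[OF True] by simp
  next
    case False
    then have k: "k = ?m" using k by simp
    have "breg ?S' k \<subseteq> breg S i" using k fc by (simp add: add_box_new fits_child_def)
    also have "breg S i \<subseteq> {p. 0 \<le> fst p \<and> fst p \<le> 2 * real (nbasic S)}" using L2[rule_format, OF im] .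
    finally show ?thesis using nb by simp
  qed
  have P3: "\<exists>u. fits_child ?S' i' (btype ?S' c) u"
    if c: "c < length (boxes ?S')" "bparent ?S' c = Some i'"
      "\<forall>c'<length (boxes ?S'). bparent ?S' c' = Some i' \<longrightarrow> c' = c" for i' c
  proof (cases "i' = i")
    case True
    have cm: "c = ?m" using c(3)[rule_format, of ?m] True by (simp add: add_box_new)
    have noch: "\<forall>j<?m. bparent S j \<noteq> Some i"
    proof (intro allI impI notI)
      fix j assume j: "j < ?m" "bparent S j = Some i"
      then have "bparent ?S' j = Some i'" using True by (simp add: add_box_old)
      then have "j = c" using c(3) j by simp
      then show False using cm j by simp
    qed
    from room[OF lm x(2) x(1) noch im] show ?thesis using True cm by (simp add: add_box_new)
  next
    case False
    have cm: "c < ?m"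
    proof (rule ccontr)
      assume "\<not> c < ?m" then have "c = ?m" using c(1) by simp
      then show False using c(2) False by (simp add: add_box_new)
    qed
    have bp: "bparent S c = Some i'" using c(2) cm by (simp add: add_box_old)
    have "\<forall>c'<?m. bparent S c' = Some i' \<longrightarrow> c' = c"
      using c(3) by (auto simp: add_box_old)
    then obtain u where u: "fits_child S i' (btype S c) u" using L3 cm bp by blast
    have "i' < c" using L1 cm bp by fastforce
    then have "i' < ?m" using cm by simp
    then have "fits_child ?S' i' (btype S c) u" using fits_add[of i' S "(T, v, Some i)"] False u by simp
    moreover have "btype ?S' c = btype S c" using cm by (simp add: add_box_old)
    ultimately have "fits_child ?S' i' (btype ?S' c) u" by simp
    then show ?thesis by (rule exI)
  qed
  show ?thesis unfolding LI_def
    apply (rule conjI)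
     apply (intro allI impI, erule P1)
    apply (rule conjI)
     apply (intro allI impI, erule P2)
    apply (intro allI impI, elim conjE, rule P3, assumption+)
    done
qed

lemma LI_add_basic:
  assumes LI: "LI S" and lb: "leftmost_basic S v"
  shows "LI (add_box S ([], v, None))"
proof -
  let ?S' = "add_box S ([], v, None)"
  let ?m = "length (boxes S)"
  let ?M = "2 * real (nbasic S)"
  note L1 = LI_1[OF LI] and L2 = LI_2[OF LI] and L3 = LI_3[OF LI]
  have nb: "nbasic ?S' = nbasic S + 1" by (simp add: nbasic_add)
  have bt0: "box_type [] = hpar 0 2 0" by (simp add: box_type_def type_params_def)
  have "fits_basic S (?M, 0)"
  proof -
    have e: "transl (?M, 0) (box_type []) = gp ?M 0 2 0" by (simp add: bt0 transl_hpar)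
    have "gp ?M 0 2 0 \<subseteq> strip" by (auto simp: gp_def strip_def)
    moreover have "int_disjoint (gp ?M 0 2 0) (breg S j)" if "j < ?m" for j
    proof -
      have "breg S j \<subseteq> {p. 0 \<le> fst p \<and> fst p \<le> ?M}" using L2[rule_format, OF that] .
      then have A: "breg S j \<subseteq> {p. fst p - 0 * snd p \<le> ?M}" by auto
      have B: "gp ?M 0 2 0 \<subseteq> {p. fst p - 0 * snd p \<ge> ?M}" by (auto simp: gp_def)
      show ?thesis using int_disj_sep[OF A B] by (auto simp: int_disjoint_def)
    qed
    ultimately show ?thesis unfolding fits_basic_def e by blast
  qed
  then have vM: "fst v \<le> ?M" using lb by (auto simp: leftmost_basic_def)
  have vs: "transl v (box_type []) \<subseteq> strip" using lb by (simp add: leftmost_basic_def fits_basic_def)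
  have P1: "valid_type (btype ?S' k) \<and>
       (case bparent ?S' k of None \<Rightarrow> btype ?S' k = [] | Some p \<Rightarrow> p < k \<and> is_child_type (btype ?S' p) (btype ?S' k))"
    if k: "k < length (boxes ?S')" for k
  proof (cases "k < ?m")
    case True
    have "valid_type (btype S k) \<and>
       (case bparent S k of None \<Rightarrow> btype S k = [] | Some p \<Rightarrow> p < k \<and> is_child_type (btype S p) (btype S k))"
      using L1 True by blast
    then show ?thesis using True by (auto simp: add_box_old split: option.splits)
  next
    case False
    then have k: "k = ?m" using k by simp
    then show ?thesis by (simp add: add_box_new valid_type_def)
  qed
  have P2: "breg ?S' k \<subseteq> {p. 0 \<le> fst p \<and> fst p \<le> 2 * real (nbasic ?S')}" if k: "k < length (boxes ?S')" for k
  proof (cases "k < ?m")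
    case True
    have "breg S k \<subseteq> {p. 0 \<le> fst p \<and> fst p \<le> ?M}" using L2[rule_format, OF True] .
    then show ?thesis using nb add_box_old(3)[OF True] by auto
  next
    case False
    then have k: "k = ?m" using k by simp
    have e: "breg ?S' k = gp (fst v) (snd v) 2 0" using k by (simp add: add_box_new bt0 transl_hpar)
    have "gp (fst v) (snd v) 2 0 \<subseteq> {p. fst p \<le> fst v + 2}" by (auto simp: gp_def)
    moreover have "gp (fst v) (snd v) 2 0 \<subseteq> strip" using vs by (simp add: bt0 transl_hpar)
    ultimately show ?thesis unfolding e using vM nb by (auto simp: strip_def)
  qed
  have P3: "\<exists>u. fits_child ?S' i' (btype ?S' c) u"
    if c: "c < length (boxes ?S')" "bparent ?S' c = Some i'"
      "\<forall>c'<length (boxes ?S'). bparent ?S' c' = Some i' \<longrightarrow> c' = c" for i' c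
  proof -
    have cm: "c < ?m"
    proof (rule ccontr)
      assume "\<not> c < ?m" then have "c = ?m" using c(1) by simp
      then show False using c(2) by (simp add: add_box_new)
    qed
    have bp: "bparent S c = Some i'" using c(2) cm by (simp add: add_box_old)
    have "\<forall>c'<?m. bparent S c' = Some i' \<longrightarrow> c' = c"
      using c(3) by (auto simp: add_box_old)
    then obtain u where u: "fits_child S i' (btype S c) u" using L3 cm bp by blast
    have "i' < c" using L1 cm bp by fastforce
    then have "i' < ?m" using cm by simp
    then have "fits_child ?S' i' (btype S c) u" using fits_add[of i' S "([], v, None)"] u by simp
    moreover have "btype ?S' c = btype S c" using cm by (simp add: add_box_old)
    ultimately have "fits_child ?S' i' (btype ?S' c) u" by simp
    then show ?thesis by (rule exI)
  qed
  show ?thesis unfolding LI_def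
    apply (rule conjI)
     apply (intro allI impI, erule P1)
    apply (rule conjI)
     apply (intro allI impI, erule P2)
    apply (intro allI impI, elim conjE, rule P3, assumption+)
    done
qed

lemma chain_shape:
  assumes "alloc_chain S i Ts S' j"
  shows "\<exists>zs. boxes S' = boxes S @ zs \<and> length zs = length Ts \<and> pcs S' = pcs S \<and>
    (\<forall>l<length Ts. fst (zs ! l) = Ts ! l \<and>
        snd (snd (zs ! l)) = Some (if l = 0 then i else length (boxes S) + l - 1)) \<and>
    j = (if Ts = [] then i else length (boxes S) + length Ts - 1)"
  using assms
proof (induction rule: alloc_chain.induct)
  case (nil S i)
  then show ?case by simp
next
  case (cons S i T v Ts S' j)
  then obtain zs where zs: "boxes S' = boxes (add_box S (T, v, Some i)) @ zs" "length zs = length Ts"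
    "pcs S' = pcs S"
    "\<forall>l<length Ts. fst (zs ! l) = Ts ! l \<and>
        snd (snd (zs ! l)) = Some (if l = 0 then length (boxes S) else length (boxes S) + 1 + l - 1)"
    "j = (if Ts = [] then length (boxes S) else length (boxes S) + 1 + length Ts - 1)"
    by auto
  let ?zs = "(T, v, Some i) # zs"
  have "\<forall>l<length (T # Ts). fst (?zs ! l) = (T # Ts) ! l \<and>
        snd (snd (?zs ! l)) = Some (if l = 0 then i else length (boxes S) + l - 1)"
  proof (intro allI impI)
    fix l assume l: "l < length (T # Ts)"
    show "fst (?zs ! l) = (T # Ts) ! l \<and>
        snd (snd (?zs ! l)) = Some (if l = 0 then i else length (boxes S) + l - 1)"
    proof (cases l)
      case 0 then show ?thesis by simp
    next
      case (Suc l')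
      then have l': "l' < length Ts" using l by simp
      have "fst (zs ! l') = Ts ! l' \<and>
        snd (snd (zs ! l')) = Some (if l' = 0 then length (boxes S) else length (boxes S) + 1 + l' - 1)"
        using zs(4) l' by blast
      moreover have "(if l' = 0 then length (boxes S) else length (boxes S) + 1 + l' - 1) = length (boxes S) + l - 1"
        using Suc by simp
      ultimately show ?thesis using Suc by simp
    qed
  qed
  note A = this
  have B: "boxes S' = boxes S @ ?zs" using zs(1) by simp
  have C: "length ?zs = length (T # Ts)" using zs(2) by simp
  have D: "j = (if T # Ts = [] then i else length (boxes S) + length (T # Ts) - 1)"
    using zs(5) by simp
  show ?case by (rule exI[of _ ?zs], intro conjI, fact B, fact C, fact zs(3), fact A, fact D)
qed

lemma chain_LI:
  assumes "alloc_chain S i Ts S' j"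
  shows "LI S \<Longrightarrow> i < length (boxes S) \<Longrightarrow>
    (\<forall>l<length Ts. is_child_type ((btype S i # Ts) ! l) (Ts ! l)) \<Longrightarrow> LI S'"
  using assms
proof (induction rule: alloc_chain.induct)
  case (nil S i)
  then show ?case by simp
next
  case (cons S i T v Ts S' j)
  have ch: "is_child_type (btype S i) T" using cons.prems(3)[rule_format, of 0] by simp
  have LI1: "LI (add_box S (T, v, Some i))" using LI_add_child[OF cons.prems(1) cons.hyps(1) cons.prems(2) ch] .
  have bt: "btype (add_box S (T, v, Some i)) (length (boxes S)) = T" by (simp add: add_box_new)
  have "\<forall>l<length Ts. is_child_type ((T # Ts) ! l) (Ts ! l)"
  proof (intro allI impI)
    fix l assume "l < length Ts"
    then have "Suc l < length (T # Ts)" by simp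
    then have "is_child_type ((btype S i # T # Ts) ! Suc l) ((T # Ts) ! Suc l)" using cons.prems(3) by blast
    then show "is_child_type ((T # Ts) ! l) (Ts ! l)" by simp
  qed
  then show ?case using cons.IH[OF LI1] bt by simp
qed


definition haschild :: "pstate \<Rightarrow> nat \<Rightarrow> bool" where
  "haschild S i \<longleftrightarrow> (\<exists>c<length (boxes S). bparent S c = Some i)"

definition single :: "pstate \<Rightarrow> nat \<Rightarrow> nat \<Rightarrow> bool" where
  "single S i c \<longleftrightarrow> c < length (boxes S) \<and> bparent S c = Some i \<and>
     (\<forall>c'<length (boxes S). bparent S c' = Some i \<longrightarrow> c' = c)"

definition PI :: "(real \<times> real) set list \<Rightarrow> pstate \<Rightarrow> bool" where
  "PI ps S \<longleftrightarrow> length (pcs S) = length ps \<and>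
    (\<forall>k<length ps. (\<exists>v. fst (pcs S ! k) = transl v (ps ! k)) \<and> snd (pcs S ! k) < length (boxes S) \<and>
       fst (pcs S ! k) \<subseteq> breg S (snd (pcs S ! k)) \<and>
       area (box_type (btype S (snd (pcs S ! k)))) \<le> 6 * area (ps ! k))"

definition EI :: "pstate \<Rightarrow> bool" where
  "EI S \<longleftrightarrow> (\<forall>i<length (boxes S). has_piece S i \<or> haschild S i)"

definition II :: "pstate \<Rightarrow> bool" where
  "II S \<longleftrightarrow> (\<forall>i<length (boxes S). has_piece S i \<longrightarrow> \<not> haschild S i)"

definition GI :: "pstate \<Rightarrow> bool" where
  "GI S \<longleftrightarrow> (\<forall>i i' c c'. single S i c \<longrightarrow> single S i' c' \<longrightarrow> btype S c = btype S c' \<longrightarrow> i = i')"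

definition Inv :: "(real \<times> real) set list \<Rightarrow> pstate \<Rightarrow> bool" where
  "Inv ps S \<longleftrightarrow> LI S \<and> PI ps S \<and> EI S \<and> II S \<and> GI S"

lemma boxes_eq_fns:
  assumes "boxes A = boxes B"
  shows "btype A = btype B" "bparent A = bparent B" "breg A = breg B" "nbasic A = nbasic B"
    "fits_child A = fits_child B"
  using assms by (simp_all add: fun_eq_iff btype_def bparent_def breg_def nbasic_def fits_child_def)

lemma LI_boxes: assumes "boxes A = boxes B" shows "LI A = LI B"
proof -
  note e = boxes_eq_fns[OF assms]
  show ?thesis unfolding LI_def e assms ..
qed

lemma path_ne: "path_to_match T1 Ts P \<Longrightarrow> Ts \<noteq> []"
  unfolding path_to_match_def by (elim conjE)

lemma path_hd: "path_to_match T1 Ts P \<Longrightarrow> hd Ts = T1"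
  unfolding path_to_match_def by (elim conjE)

lemma path_match: "path_to_match T1 Ts P \<Longrightarrow> matches (last Ts) P"
  unfolding path_to_match_def by (elim conjE)

lemma path_nth0: "path_to_match T1 Ts P \<Longrightarrow> Ts ! 0 = T1"
  using path_ne path_hd by (metis hd_conv_nth)

lemma path_cons: "path_to_match T1 Ts P \<Longrightarrow> T1 # tl Ts = Ts"
  using path_ne path_hd by (metis list.collapse)

lemma path_child: assumes "path_to_match T1 Ts P" "Suc l < length Ts" shows "is_child_type (Ts ! l) (Ts ! Suc l)"
proof -
  have "\<forall>j. Suc j < length Ts \<longrightarrow> is_child_type (Ts ! j) (Ts ! Suc j)"
    using assms(1) unfolding path_to_match_def by (elim conjE)
  then show ?thesis using assms(2) by simp
qed

lemma path_len: assumes "path_to_match T1 Ts P" shows "l < length Ts \<Longrightarrow> length (Ts ! l) = length T1 + l"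
proof (induction l)
  case 0 then show ?case using path_nth0[OF assms] by simp
next
  case (Suc l)
  have "is_child_type (Ts ! l) (Ts ! Suc l)" using path_child[OF assms Suc.prems] .
  then obtain x where x: "Ts ! Suc l = Ts ! l @ [x]" unfolding is_child_type_def by blast
  have "length (Ts ! l) = length T1 + l" using Suc.IH Suc.prems by simp
  then show ?case using x by simp
qed

lemma path_len_inj:
  assumes "path_to_match T1 Ts P" "l < length Ts" "l' < length Ts" "Ts ! l = Ts ! l'"
  shows "l = l'"
proof -
  have a: "length (Ts ! l) = length T1 + l" using path_len[OF assms(1) assms(2)] .
  have b: "length (Ts ! l') = length T1 + l'" using path_len[OF assms(1) assms(3)] .
  have "length (Ts ! l) = length (Ts ! l')" using assms(4) by (rule arg_cong)
  then show ?thesis using a b by linarith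
qed

lemma exok:
  assumes "i' < length (boxes S)" "path_to_match T1 Ts P" "Suc l < length Ts" "btype S i' = Ts ! l"
    "\<not> has_piece S i'" "fits_child S i' (Ts ! Suc l) u"
  shows "existing_ok S P i' (drop l Ts)"
proof -
  have "path_to_match (btype S i') (drop l Ts) P"
    unfolding path_to_match_def
  proof (intro conjI allI impI)
    show "drop l Ts \<noteq> []" using assms(3) by simp
    show "hd (drop l Ts) = btype S i'" using assms(3,4) by (simp add: hd_drop_conv_nth)
    show "is_child_type (drop l Ts ! j) (drop l Ts ! Suc j)" if "Suc j < length (drop l Ts)" for j
      using path_child[OF assms(2), of "l + j"] that by simp
    have "matches (last Ts) P" using path_match[OF assms(2)] .
    then show "matches (last (drop l Ts)) P" using assms(3) by (simp add: last_drop)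
  qed
  note A = this
  have B: "drop l Ts ! 1 = Ts ! Suc l" using assms(3) by simp
  show ?thesis unfolding existing_ok_def
  proof (intro conjI)
    show "i' < length (boxes S)" by (rule assms(1))
    show "path_to_match (btype S i') (drop l Ts) P" by (rule A)
    show "2 \<le> length (drop l Ts)" using assms(3) by simp
    show "\<not> has_piece S i'" by (rule assms(5))
    show "\<exists>v. fits_child S i' (drop l Ts ! 1) v" unfolding B using assms(6) by (rule exI)
  qed
qed


lemma hp_lt: assumes "PI ps S" "has_piece S k" shows "k < length (boxes S)"
proof -
  obtain Q where Q: "(Q, k) \<in> set (pcs S)" using assms(2) unfolding has_piece_def by blast
  then obtain n where n: "n < length (pcs S)" "pcs S ! n = (Q, k)" by (auto simp: in_set_conv_nth)
  have a: "length (pcs S) = length ps" using assms(1) unfolding PI_def by (elim conjE)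
  have b: "\<forall>k<length ps. snd (pcs S ! k) < length (boxes S)" using assms(1) unfolding PI_def by auto
  show ?thesis using b[rule_format, of n] n a by simp
qed

lemma G:
  assumes LI0: "LI S0" and PI0: "PI ps S0" and II0: "II S0" and GI0: "GI S0"
    and E0: "\<forall>i<length (boxes S0). i \<noteq> i0 \<longrightarrow> has_piece S0 i \<or> haschild S0 i"
    and i0: "i0 < length (boxes S0)" and np0: "\<not> has_piece S0 i0"
    and nc0: "tl Ts = [] \<longrightarrow> \<not> haschild S0 i0"
    and pm: "path_to_match (btype S0 i0) Ts P"
    and ac: "alloc_chain S0 i0 (tl Ts) S1 j"
    and pl: "place S1 j P S'"
    and H: "\<forall>i'<length (boxes S0). i' \<noteq> i0 \<longrightarrow> (\<forall>l. Suc l < length Ts \<longrightarrow> btype S0 i' = Ts ! l \<longrightarrow>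
              \<not> has_piece S0 i' \<longrightarrow> (\<exists>u. fits_child S0 i' (Ts ! Suc l) u) \<longrightarrow> l = 0 \<and> haschild S0 i0)"
  shows "Inv (ps @ [P]) S'"
proof -
  define m0 where "m0 = length (boxes S0)"
  define r where "r = length (tl Ts)"
  have TsN: "Ts \<noteq> []" using path_ne[OF pm] .
  have lenTs: "length Ts = Suc r" using TsN unfolding r_def by (cases Ts) simp_all
  have Tsc: "btype S0 i0 # tl Ts = Ts" using path_cons[OF pm] .
  have T0: "Ts ! 0 = btype S0 i0" using path_nth0[OF pm] .
  have tlnth: "tl Ts ! l = Ts ! Suc l" for l using Tsc by (metis nth_Cons_Suc)
  obtain zs where zs1: "boxes S1 = boxes S0 @ zs" and zs2: "length zs = length (tl Ts)" and zs3: "pcs S1 = pcs S0"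
     and zs4: "\<forall>l<length (tl Ts). fst (zs ! l) = tl Ts ! l \<and>
        snd (snd (zs ! l)) = Some (if l = 0 then i0 else length (boxes S0) + l - 1)"
     and zs5: "j = (if tl Ts = [] then i0 else length (boxes S0) + length (tl Ts) - 1)"
    using chain_shape[OF ac] by (elim exE conjE) (rule that; assumption)
  obtain v where v1: "transl v P \<subseteq> breg S1 j" and v2: "S' = S1\<lparr>pcs := pcs S1 @ [(transl v P, j)]\<rparr>"
    using pl unfolding place_def by blast
  have bS': "boxes S' = boxes S1" using v2 by simp
  have bS'0: "boxes S' = boxes S0 @ zs" using bS' zs1 by simp
  have pS': "pcs S' = pcs S0 @ [(transl v P, j)]" using v2 zs3 by simp
  have lenS': "length (boxes S') = m0 + r" using bS'0 zs2 by (simp add: m0_def r_def)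
  have old: "btype S' k = btype S0 k" "bparent S' k = bparent S0 k" "breg S' k = breg S0 k" if "k < m0" for k
    using that by (simp_all add: btype_def bparent_def breg_def bS'0 nth_append m0_def)
  have newt: "btype S' (m0 + l) = Ts ! Suc l" if "l < r" for l
  proof -
    have "fst (zs ! l) = tl Ts ! l" using zs4[rule_format, of l] that r_def by simp
    then show ?thesis by (simp add: btype_def bS'0 nth_append m0_def tlnth)
  qed
  have newp: "bparent S' (m0 + l) = Some (if l = 0 then i0 else m0 + l - 1)" if "l < r" for l
  proof -
    have "snd (snd (zs ! l)) = Some (if l = 0 then i0 else m0 + l - 1)"
      using zs4[rule_format, of l] that r_def m0_def by simp
    then show ?thesis by (simp add: bparent_def bS'0 nth_append m0_def)
  qed
  have r0: "tl Ts = [] \<longleftrightarrow> r = 0" unfolding r_def by (rule length_0_conv[symmetric])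
  have jdef: "j = (if r = 0 then i0 else m0 + r - 1)" using zs5 r0 by (simp add: m0_def r_def)
  have hp: "has_piece S' k \<longleftrightarrow> has_piece S0 k \<or> k = j" for k unfolding has_piece_def pS' by auto
  have i0m: "i0 < m0" using i0 m0_def by simp
  have pathc: "\<forall>l<length (tl Ts). is_child_type ((btype S0 i0 # tl Ts) ! l) (tl Ts ! l)"
  proof (intro allI impI)
    fix l assume "l < length (tl Ts)"
    then have "l < r" unfolding r_def .
    then have "Suc l < length Ts" using lenTs by simp
    then show "is_child_type ((btype S0 i0 # tl Ts) ! l) (tl Ts ! l)"
      unfolding Tsc tlnth by (rule path_child[OF pm])
  qed
  have LI1: "LI S1" by (rule chain_LI[OF ac LI0 i0 pathc])
  have LI': "LI S'" using LI1 LI_boxes[OF bS'] by simp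
  have par0: "p < c" if "c < m0" "bparent S0 c = Some p" for c p
    using LI_1[OF LI0, rule_format, of c] that m0_def by simp
  have chd0: "is_child_type (btype S0 p) (btype S0 c)" if "c < m0" "bparent S0 c = Some p" for c p
    using LI_1[OF LI0, rule_format, of c] that m0_def by simp
  have lastTs: "last Ts = Ts ! r" using lenTs TsN by (simp add: last_conv_nth)
  have btj: "btype S' j = last Ts"
  proof (cases "r = 0")
    case True
    then show ?thesis using jdef old(1)[OF i0m] lastTs T0 by simp
  next
    case False
    then have "j = m0 + (r - 1)" using jdef by simp
    then show ?thesis using newt[of "r - 1"] False lastTs by simp
  qed
  have jlt: "j < m0 + r" using jdef i0m by auto
  have brj: "breg S' j = breg S1 j" using boxes_eq_fns(3)[OF bS'] by simp
  have PI0a: "length (pcs S0) = length ps" using PI0 unfolding PI_def by (elim conjE)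
  have PI0b: "\<forall>k<length ps. (\<exists>v. fst (pcs S0 ! k) = transl v (ps ! k)) \<and> snd (pcs S0 ! k) < length (boxes S0) \<and>
       fst (pcs S0 ! k) \<subseteq> breg S0 (snd (pcs S0 ! k)) \<and>
       area (box_type (btype S0 (snd (pcs S0 ! k)))) \<le> 6 * area (ps ! k)"
    using PI0 unfolding PI_def by (elim conjE)
  have PI': "PI (ps @ [P]) S'"
    unfolding PI_def
  proof (rule conjI)
    show "length (pcs S') = length (ps @ [P])" using pS' PI0a by simp
  next
    show "\<forall>k<length (ps @ [P]). (\<exists>v. fst (pcs S' ! k) = transl v ((ps @ [P]) ! k)) \<and> snd (pcs S' ! k) < length (boxes S') \<and>
       fst (pcs S' ! k) \<subseteq> breg S' (snd (pcs S' ! k)) \<and>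
       area (box_type (btype S' (snd (pcs S' ! k)))) \<le> 6 * area ((ps @ [P]) ! k)"
  proof (intro allI impI)
    fix k assume k: "k < length (ps @ [P])"
    show "(\<exists>v. fst (pcs S' ! k) = transl v ((ps @ [P]) ! k)) \<and> snd (pcs S' ! k) < length (boxes S') \<and>
       fst (pcs S' ! k) \<subseteq> breg S' (snd (pcs S' ! k)) \<and>
       area (box_type (btype S' (snd (pcs S' ! k)))) \<le> 6 * area ((ps @ [P]) ! k)"
    proof (cases "k < length ps")
      case True
      have e1: "pcs S' ! k = pcs S0 ! k" using True PI0a pS' by (simp add: nth_append)
      have e2: "(ps @ [P]) ! k = ps ! k" using True by (simp add: nth_append)
      have f: "(\<exists>v. fst (pcs S0 ! k) = transl v (ps ! k)) \<and> snd (pcs S0 ! k) < length (boxes S0) \<and>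
       fst (pcs S0 ! k) \<subseteq> breg S0 (snd (pcs S0 ! k)) \<and>
       area (box_type (btype S0 (snd (pcs S0 ! k)))) \<le> 6 * area (ps ! k)" using PI0b True by blast
      have lt: "snd (pcs S0 ! k) < m0" using f m0_def by simp
      show ?thesis unfolding e1 e2 using f old[OF lt] lenS' lt by simp
    next
      case False
      then have kk: "k = length ps" using k by simp
      have e1: "pcs S' ! k = (transl v P, j)" using kk PI0a pS' by (simp add: nth_append)
      have e2: "(ps @ [P]) ! k = P" using kk by simp
      have "matches (last Ts) P" using path_match[OF pm] .
      then have ar: "area (box_type (last Ts)) \<le> 6 * area P" unfolding matches_def by (elim conjE)
      have ex: "\<exists>w. transl v P = transl w P" by (rule exI[of _ v]) (rule refl)
      show ?thesis unfolding e1 e2 using ex v1 brj btj ar jlt lenS' by simp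
    qed
  qed
  qed
  have EI': "EI S'"
    unfolding EI_def
  proof (intro allI impI)
    fix k assume k: "k < length (boxes S')"
    show "has_piece S' k \<or> haschild S' k"
    proof (cases "k < m0")
      case True
      show ?thesis
      proof (cases "k = i0")
        case True
        show ?thesis
        proof (cases "r = 0")
          case True then show ?thesis using hp jdef \<open>k = i0\<close> by simp
        next
          case False
          have "bparent S' (m0 + 0) = Some i0" using newp[of 0] False by simp
          moreover have "m0 + 0 < length (boxes S')" using lenS' False by simp
          ultimately show ?thesis unfolding haschild_def using \<open>k = i0\<close> by blast
        qed
      next
        case False
        have "has_piece S0 k \<or> haschild S0 k" using E0[rule_format, of k] False \<open>k < m0\<close> m0_def by simp
        then show ?thesis
        proof
          assume "has_piece S0 k" then show ?thesis using hp by simp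
        next
          assume "haschild S0 k"
          then obtain c where c: "c < m0" "bparent S0 c = Some k" unfolding haschild_def m0_def by blast
          then have "bparent S' c = Some k" "c < length (boxes S')" using old(2)[OF c(1)] lenS' by simp_all
          then show ?thesis unfolding haschild_def by blast
        qed
      qed
    next
      case False
      define l where "l = k - m0"
      have kl: "k = m0 + l" "l < r" using False k lenS' l_def by simp_all
      show ?thesis
      proof (cases "Suc l = r")
        case True
        then have "k = j" using jdef kl by simp
        then show ?thesis using hp by simp
      next
        case False
        then have "Suc l < r" using kl by simp
        then have "bparent S' (m0 + Suc l) = Some k" using newp[of "Suc l"] kl by simp
        moreover have "m0 + Suc l < length (boxes S')" using lenS' \<open>Suc l < r\<close> by simp
        ultimately show ?thesis unfolding haschild_def by blast
      qed
    qed
  qed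
  have II0': "\<forall>i<length (boxes S0). has_piece S0 i \<longrightarrow> \<not> haschild S0 i" using II0 unfolding II_def .
  have II': "II S'"
    unfolding II_def
  proof (intro allI impI notI)
    fix k assume k: "k < length (boxes S')" and hk: "has_piece S' k" and ck: "haschild S' k"
    obtain c where c: "c < m0 + r" "bparent S' c = Some k" using ck lenS' unfolding haschild_def by auto
    have "has_piece S0 k \<or> k = j" using hk hp by simp
    then show False
    proof
      assume h0: "has_piece S0 k"
      have km: "k < m0" using hp_lt[OF PI0 h0] m0_def by simp
      have ki: "k \<noteq> i0" using h0 np0 by auto
      show False
      proof (cases "c < m0")
        case True
        then have "bparent S0 c = Some k" using c old(2) by simp
        then have "haschild S0 k" unfolding haschild_def using True m0_def by blast
        then show False using II0'[rule_format, of k] km m0_def h0 by simp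
      next
        case False
        define l where "l = c - m0"
        have cl: "c = m0 + l" "l < r" using False c l_def by simp_all
        then have "Some k = Some (if l = 0 then i0 else m0 + l - 1)" using newp c by simp
        then show False using ki km by (cases "l = 0") simp_all
      qed
    next
      assume kj: "k = j"
      show False
      proof (cases "r = 0")
        case True
        then have "k = i0" "c < m0" using kj jdef c by simp_all
        then have "haschild S0 i0" unfolding haschild_def using c old(2) m0_def by auto
        then show False using nc0 r0 True by simp
      next
        case False
        then have kk: "k = m0 + r - 1" using kj jdef by simp
        show False
        proof (cases "c < m0")
          case True
          then have "bparent S0 c = Some k" using c old(2) by simp
          then have "k < c" using par0 True by blast
          then show False using kk True False by simp
        next
          case False
          define l where "l = c - m0"
          have cl: "c = m0 + l" "l < r" using False c l_def by simp_all
          then have "Some k = Some (if l = 0 then i0 else m0 + l - 1)" using newp c by simp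
          then show False using kk i0m cl \<open>r \<noteq> 0\<close> by (cases "l = 0") simp_all
        qed
      qed
    qed
  qed
  have sing_old: "single S0 i c" if "single S' i c" "c < m0" for i c
  proof -
    have s1: "bparent S' c = Some i" using that(1) unfolding single_def by (elim conjE)
    have s2: "\<forall>c'<length (boxes S'). bparent S' c' = Some i \<longrightarrow> c' = c"
      using that(1) unfolding single_def by (elim conjE)
    have a: "bparent S0 c = Some i" using s1 old(2)[OF that(2)] by simp
    have "\<forall>c'<m0. bparent S0 c' = Some i \<longrightarrow> c' = c"
    proof (intro allI impI)
      fix c' assume c': "c' < m0" "bparent S0 c' = Some i"
      have "bparent S' c' = Some i" using c' old(2)[OF c'(1)] by simp
      moreover have "c' < length (boxes S')" using c' lenS' by simp
      ultimately show "c' = c" using s2[rule_format, of c'] by blast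
    qed
    then have "\<forall>c'<length (boxes S0). bparent S0 c' = Some i \<longrightarrow> c' = c" unfolding m0_def .
    moreover have "c < length (boxes S0)" using that(2) m0_def by simp
    ultimately show ?thesis unfolding single_def using a by blast
  qed
  have GI0': "\<forall>i i' c c'. single S0 i c \<longrightarrow> single S0 i' c' \<longrightarrow> btype S0 c = btype S0 c' \<longrightarrow> i = i'"
    using GI0 unfolding GI_def .
  have aux: "i = i'" if s: "single S' i c" and s': "single S' i' c'" and cn: "\<not> c < m0" and co: "c' < m0"
      and eq: "btype S' c = btype S' c'" for i i' c c'
  proof -
    define l where "l = c - m0"
    have clt: "c < length (boxes S')" using s unfolding single_def by (elim conjE)
    have cl: "c = m0 + l" "l < r" using cn clt lenS' l_def by simp_all
    have pc: "bparent S' c = Some i" using s unfolding single_def by simp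
    have pc': "bparent S0 c' = Some i'" using s' old(2)[OF co] unfolding single_def by simp
    have s0: "single S0 i' c'" using sing_old[OF s' co] .
    have i'c: "i' < c'" using par0[OF co pc'] .
    have hc: "haschild S0 i'" unfolding haschild_def using co pc' m0_def by blast
    have i'm: "i' < length (boxes S0)" using i'c co m0_def by simp
    have nph: "\<not> has_piece S0 i'" using II0'[rule_format, OF i'm] hc by blast
    have s0': "c' < length (boxes S0) \<and> bparent S0 c' = Some i' \<and> (\<forall>c''<length (boxes S0). bparent S0 c'' = Some i' \<longrightarrow> c'' = c')"
      using s0 unfolding single_def .
    obtain u where u: "fits_child S0 i' (btype S0 c') u" using LI_3[OF LI0, rule_format, OF s0'] by (elim exE)
    have bt: "btype S0 c' = Ts ! Suc l" using eq newt[OF cl(2)] cl(1) old(1)[OF co] by simp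
    obtain x' where x': "btype S0 c' = btype S0 i' @ [x']" using chd0[OF co pc'] unfolding is_child_type_def by blast
    have sl: "Suc l < length Ts" using cl lenTs by simp
    obtain x where x: "Ts ! Suc l = Ts ! l @ [x]" using path_child[OF pm sl] unfolding is_child_type_def by blast
    have bi': "btype S0 i' = Ts ! l" using x x' bt by simp
    show "i = i'"
    proof (cases "i' = i0")
      case True
      then have "Ts ! l = Ts ! 0" using bi' T0 by simp
      then have "l = 0" using path_len_inj[OF pm, of l 0] sl TsN by simp
      then show ?thesis using newp[OF cl(2)] pc cl True by simp
    next
      case False
      have u': "fits_child S0 i' (Ts ! Suc l) u" using u unfolding bt .
      have "l = 0 \<and> haschild S0 i0"
        using H[rule_format, OF i'm False sl bi' nph exI[where P="\<lambda>w. fits_child S0 i' (Ts ! Suc l) w", OF u']] .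
      then have l0: "l = 0" and hc0: "haschild S0 i0" by simp_all
      have ii0: "i = i0" using newp[OF cl(2)] pc l0 cl by simp
      obtain c0 where c0: "c0 < m0" "bparent S0 c0 = Some i0" using hc0 unfolding haschild_def m0_def by blast
      have "bparent S' c0 = Some i" using old(2)[OF c0(1)] c0(2) ii0 by simp
      moreover have "c0 < length (boxes S')" using c0 lenS' by simp
      moreover have "\<forall>c'<length (boxes S'). bparent S' c' = Some i \<longrightarrow> c' = c"
        using s unfolding single_def by (elim conjE)
      ultimately have "c0 = c" by blast
      then show ?thesis using c0 cl by simp
    qed
  qed
  have GI': "GI S'"
    unfolding GI_def
  proof (intro allI impI)
    fix i i' c c' assume s: "single S' i c" and s': "single S' i' c'" and eq: "btype S' c = btype S' c'"
    show "i = i'"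
    proof (cases "c < m0")
      case True
      show ?thesis
      proof (cases "c' < m0")
        case True
        have "btype S0 c = btype S0 c'" using eq old(1) \<open>c < m0\<close> True by simp
        then show ?thesis using GI0' sing_old[OF s \<open>c < m0\<close>] sing_old[OF s' True] by blast
      next
        case False
        show ?thesis using aux[OF s' s False \<open>c < m0\<close>] eq by simp
      qed
    next
      case False
      show ?thesis
      proof (cases "c' < m0")
        case True
        show ?thesis using aux[OF s s' False True eq] .
      next
        case False
        define l where "l = c - m0"
        define l' where "l' = c' - m0"
        have clt: "c < length (boxes S')" using s unfolding single_def by (elim conjE)
        have clt': "c' < length (boxes S')" using s' unfolding single_def by (elim conjE)
        have cl: "c = m0 + l" "l < r" using \<open>\<not> c < m0\<close> clt lenS' l_def by simp_all
        have cl': "c' = m0 + l'" "l' < r" using False clt' lenS' l'_def by simp_all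
        have "Ts ! Suc l = Ts ! Suc l'" using eq newt cl cl' by simp
        then have "Suc l = Suc l'" using path_len_inj[OF pm, of "Suc l" "Suc l'"] cl cl' lenTs by simp
        then have "c = c'" using cl cl' by simp
        moreover have "bparent S' c = Some i" using s unfolding single_def by (elim conjE)
        moreover have "bparent S' c' = Some i'" using s' unfolding single_def by (elim conjE)
        ultimately show ?thesis by simp
      qed
    qed
  qed
  show ?thesis unfolding Inv_def using LI' PI' EI' II' GI' by simp
qed


lemma Inv_init: "Inv [] empty_state"
  by (simp add: Inv_def LI_def PI_def EI_def II_def GI_def single_def empty_state_def)

lemma hp_add[simp]: "has_piece (add_box S b) i = has_piece S i"
  by (simp add: has_piece_def)

lemma hc_add_basic: "haschild (add_box S (T, v, None)) i = haschild S i"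
proof -
  have "(\<exists>c<Suc (length (boxes S)). bparent (add_box S (T, v, None)) c = Some i) \<longleftrightarrow>
        (\<exists>c<length (boxes S). bparent S c = Some i)"
    by (auto simp: less_Suc_eq add_box_old add_box_new)
  then show ?thesis unfolding haschild_def by simp
qed

lemma Inv_step:
  assumes I: "Inv ps S" and st: "op_step S P S'"
  shows "Inv (ps @ [P]) S'"
proof -
  have LI0: "LI S" and PI0: "PI ps S" and EI0: "EI S" and II0: "II S" and GI0: "GI S"
    using I unfolding Inv_def by simp_all
  have EI0': "\<forall>i<length (boxes S). has_piece S i \<or> haschild S i" using EI0 unfolding EI_def .
  from st[unfolded op_step_def] show ?thesis
  proof (elim disjE)
    assume "\<exists>i Ts. existing_ok S P i Ts \<and>
        (\<forall>i' Ts'. existing_ok S P i' Ts' \<longrightarrow> length (btype S i') \<le> length (btype S i)) \<and>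
        (\<exists>S1 j. alloc_chain S i (tl Ts) S1 j \<and> place S1 j P S')"
    then obtain i Ts S1 j where ok: "existing_ok S P i Ts"
      and mx: "\<forall>i' Ts'. existing_ok S P i' Ts' \<longrightarrow> length (btype S i') \<le> length (btype S i)"
      and ac: "alloc_chain S i (tl Ts) S1 j" and pl: "place S1 j P S'" by (elim exE conjE) (rule that; assumption)
    have im: "i < length (boxes S)" and pm: "path_to_match (btype S i) Ts P" and l2: "length Ts \<ge> 2"
      and np: "\<not> has_piece S i"
      using ok unfolding existing_ok_def by simp_all
    have E0: "\<forall>k<length (boxes S). k \<noteq> i \<longrightarrow> has_piece S k \<or> haschild S k" using EI0' by simp
    have nc0: "tl Ts = [] \<longrightarrow> \<not> haschild S i" using l2 by (cases Ts) auto
    have hci: "haschild S i" using EI0'[rule_format, OF im] np by simp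
    have H: "\<forall>i'<length (boxes S). i' \<noteq> i \<longrightarrow> (\<forall>l. Suc l < length Ts \<longrightarrow> btype S i' = Ts ! l \<longrightarrow>
              \<not> has_piece S i' \<longrightarrow> (\<exists>u. fits_child S i' (Ts ! Suc l) u) \<longrightarrow> l = 0 \<and> haschild S i)"
    proof (intro allI impI)
      fix i' l u
      assume a: "i' < length (boxes S)" "i' \<noteq> i" "Suc l < length Ts" "btype S i' = Ts ! l"
        "\<not> has_piece S i'" "\<exists>u. fits_child S i' (Ts ! Suc l) u"
      obtain u where u: "fits_child S i' (Ts ! Suc l) u" using a(6) by blast
      have "existing_ok S P i' (drop l Ts)" using exok[OF a(1) pm a(3) a(4) a(5) u] .
      then have "length (btype S i') \<le> length (btype S i)" using mx by blast
      moreover have "length (Ts ! l) = length (btype S i) + l" using path_len[OF pm] a(3) by simp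
      ultimately have "l = 0" using a(4) by simp
      then show "l = 0 \<and> haschild S i" using hci by simp
    qed
    show ?thesis by (rule G[OF LI0 PI0 II0 GI0 E0 im np nc0 pm ac pl H])
  next
    assume D: "(\<nexists>i Ts. existing_ok S P i Ts) \<and>
        (\<exists>v Ts S1 j. leftmost_basic S v \<and> path_to_match [] Ts P \<and>
           alloc_chain (add_box S ([], v, None)) (length (boxes S)) (tl Ts) S1 j \<and>
           place S1 j P S')"
    then have nex: "\<nexists>i Ts. existing_ok S P i Ts" by (elim conjE)
    obtain v Ts S1 j where lb: "leftmost_basic S v"
      and pm0: "path_to_match [] Ts P"
      and ac: "alloc_chain (add_box S ([], v, None)) (length (boxes S)) (tl Ts) S1 j"
      and pl: "place S1 j P S'"
      using D by (elim conjE exE) (rule that; assumption)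
    define S0 where "S0 = add_box S ([], v, None)"
    define m where "m = length (boxes S)"
    have lenS0: "length (boxes S0) = Suc m" unfolding S0_def m_def by simp
    have LI1: "LI S0" unfolding S0_def by (rule LI_add_basic[OF LI0 lb])
    have bt0: "btype S0 m = []" unfolding S0_def m_def by (simp add: add_box_new)
    have pm: "path_to_match (btype S0 m) Ts P" using pm0 bt0 by simp
    have oldt: "btype S0 k = btype S k" "bparent S0 k = bparent S k" "breg S0 k = breg S k" if "k < m" for k
      using that unfolding S0_def m_def by (simp_all add: add_box_old)
    have PIa: "length (pcs S) = length ps" using PI0 unfolding PI_def by (elim conjE)
    have PIb: "\<forall>k<length ps. (\<exists>v. fst (pcs S ! k) = transl v (ps ! k)) \<and> snd (pcs S ! k) < length (boxes S) \<and>
       fst (pcs S ! k) \<subseteq> breg S (snd (pcs S ! k)) \<and>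
       area (box_type (btype S (snd (pcs S ! k)))) \<le> 6 * area (ps ! k)"
      using PI0 unfolding PI_def by (elim conjE)
    have PI1: "PI ps S0" unfolding PI_def
    proof (rule conjI)
      show "length (pcs S0) = length ps" using PIa unfolding S0_def by simp
    next
      show "\<forall>k<length ps. (\<exists>v. fst (pcs S0 ! k) = transl v (ps ! k)) \<and> snd (pcs S0 ! k) < length (boxes S0) \<and>
       fst (pcs S0 ! k) \<subseteq> breg S0 (snd (pcs S0 ! k)) \<and>
       area (box_type (btype S0 (snd (pcs S0 ! k)))) \<le> 6 * area (ps ! k)"
      proof (intro allI impI)
        fix k assume k: "k < length ps"
        have f: "(\<exists>v. fst (pcs S ! k) = transl v (ps ! k)) \<and> snd (pcs S ! k) < length (boxes S) \<and>
          fst (pcs S ! k) \<subseteq> breg S (snd (pcs S ! k)) \<and>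
          area (box_type (btype S (snd (pcs S ! k)))) \<le> 6 * area (ps ! k)" using PIb k by blast
        have lt: "snd (pcs S ! k) < m" using f m_def by simp
        have pe: "pcs S0 = pcs S" unfolding S0_def by simp
        show "(\<exists>v. fst (pcs S0 ! k) = transl v (ps ! k)) \<and> snd (pcs S0 ! k) < length (boxes S0) \<and>
          fst (pcs S0 ! k) \<subseteq> breg S0 (snd (pcs S0 ! k)) \<and>
          area (box_type (btype S0 (snd (pcs S0 ! k)))) \<le> 6 * area (ps ! k)"
          unfolding pe using f oldt[OF lt] lt lenS0 by simp
      qed
    qed
    have hpS: "has_piece S0 k = has_piece S k" for k unfolding S0_def by simp
    have hcS: "haschild S0 k = haschild S k" for k unfolding S0_def by (rule hc_add_basic)
    have II0': "\<forall>i<length (boxes S). has_piece S i \<longrightarrow> \<not> haschild S i" using II0 unfolding II_def .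
    have npm: "\<not> has_piece S m" using hp_lt[OF PI0] m_def by blast
    have II1: "II S0" unfolding II_def
    proof (intro allI impI)
      fix k assume k: "k < length (boxes S0)" and h: "has_piece S0 k"
      have "has_piece S k" using h hpS by simp
      then have "k < m" using hp_lt[OF PI0] m_def by blast
      then show "\<not> haschild S0 k" using II0'[rule_format, of k] hcS \<open>has_piece S k\<close> m_def by simp
    qed
    have sing: "single S i c" if "single S0 i c" for i c
    proof -
      have "c < length (boxes S0)" using that unfolding single_def by (elim conjE)
      then have c1: "c < Suc m" using lenS0 by simp
      have c2: "bparent S0 c = Some i" using that unfolding single_def by (elim conjE)
      have c3: "\<forall>c'<length (boxes S0). bparent S0 c' = Some i \<longrightarrow> c' = c" using that unfolding single_def by (elim conjE)
      have cm: "c < m"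
      proof (rule ccontr)
        assume "\<not> c < m" then have "c = m" using c1 by simp
        then show False using c2 unfolding S0_def m_def by (simp add: add_box_new)
      qed
      have "\<forall>c'<length (boxes S). bparent S c' = Some i \<longrightarrow> c' = c"
      proof (intro allI impI)
        fix c' assume c': "c' < length (boxes S)" "bparent S c' = Some i"
        then have "bparent S0 c' = Some i" "c' < length (boxes S0)" using oldt(2)[of c'] lenS0 m_def by simp_all
        then show "c' = c" using c3[rule_format, of c'] by blast
      qed
      moreover have "bparent S c = Some i" using c2 oldt(2)[OF cm] by simp
      moreover have "c < length (boxes S)" using cm m_def by simp
      ultimately show ?thesis unfolding single_def by blast
    qed
    have GI0': "\<forall>i i' c c'. single S i c \<longrightarrow> single S i' c' \<longrightarrow> btype S c = btype S c' \<longrightarrow> i = i'"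
      using GI0 unfolding GI_def .
    have GI1: "GI S0" unfolding GI_def
    proof (intro allI impI)
      fix i i' c c' assume s: "single S0 i c" and s': "single S0 i' c'" and e: "btype S0 c = btype S0 c'"
      have s1: "single S i c" and s1': "single S i' c'" using sing s s' by simp_all
      have "c < length (boxes S)" using s1 unfolding single_def by (elim conjE)
      moreover have "c' < length (boxes S)" using s1' unfolding single_def by (elim conjE)
      ultimately have "c < m" "c' < m" using m_def by simp_all
      then have "btype S c = btype S c'" using e oldt(1) by simp
      then show "i = i'" using GI0'[rule_format, OF s1 s1'] by simp
    qed
    have E0: "\<forall>k<length (boxes S0). k \<noteq> m \<longrightarrow> has_piece S0 k \<or> haschild S0 k"
    proof (intro allI impI)
      fix k assume "k < length (boxes S0)" "k \<noteq> m"
      then have "k < length (boxes S)" using lenS0 m_def by simp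
      then show "has_piece S0 k \<or> haschild S0 k" using EI0'[rule_format, of k] hpS hcS by simp
    qed
    have im: "m < length (boxes S0)" using lenS0 by simp
    have np: "\<not> has_piece S0 m" using npm hpS by simp
    have nc: "\<not> haschild S0 m"
    proof
      assume "haschild S0 m"
      then have "haschild S m" using hcS by simp
      then obtain c where c: "c < m" "bparent S c = Some m" unfolding haschild_def m_def by blast
      have "m < c" using LI_1[OF LI0, rule_format, of c] c m_def by simp
      then show False using c by simp
    qed
    have nc0: "tl Ts = [] \<longrightarrow> \<not> haschild S0 m" using nc by simp
    have H: "\<forall>i'<length (boxes S0). i' \<noteq> m \<longrightarrow> (\<forall>l. Suc l < length Ts \<longrightarrow> btype S0 i' = Ts ! l \<longrightarrow>
              \<not> has_piece S0 i' \<longrightarrow> (\<exists>u. fits_child S0 i' (Ts ! Suc l) u) \<longrightarrow> l = 0 \<and> haschild S0 m)"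
    proof (intro allI impI)
      fix i' l
      assume a: "i' < length (boxes S0)" "i' \<noteq> m" "Suc l < length Ts" "btype S0 i' = Ts ! l"
        "\<not> has_piece S0 i'" "\<exists>u. fits_child S0 i' (Ts ! Suc l) u"
      have i'm: "i' < m" using a(1,2) lenS0 by simp
      obtain u where u: "fits_child S0 i' (Ts ! Suc l) u" using a(6) by blast
      have u': "fits_child S i' (Ts ! Suc l) u"
        using u fits_add[of i' S "([], v, None)"] i'm m_def unfolding S0_def by simp
      have "existing_ok S P i' (drop l Ts)"
        using exok[OF _ pm0 a(3) _ _ u'] i'm m_def a(4,5) oldt(1)[OF i'm] hpS by simp
      then show "l = 0 \<and> haschild S0 m" using nex by blast
    qed
    have ac': "alloc_chain S0 m (tl Ts) S1 j" using ac unfolding S0_def m_def .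
    show ?thesis by (rule G[OF LI1 PI1 II1 GI1 E0 im np nc0 pm ac' pl H])
  qed
qed

lemma packs_Inv: "packs ps S \<Longrightarrow> Inv ps S"
proof (induction rule: packs.induct)
  case init then show ?case by (rule Inv_init)
next
  case (step ps S P S') then show ?case using Inv_step by blast
qed


definition lev :: "pstate \<Rightarrow> nat \<Rightarrow> nat" where "lev S i = length (btype S i)"
definition chs :: "pstate \<Rightarrow> nat \<Rightarrow> nat set" where
  "chs S i = {c. c < length (boxes S) \<and> bparent S c = Some i}"
definition lvset :: "pstate \<Rightarrow> nat \<Rightarrow> nat set" where
  "lvset S k = {i. i < length (boxes S) \<and> lev S i = k}"
definition Nl :: "pstate \<Rightarrow> nat \<Rightarrow> nat" where "Nl S k = card (lvset S k)"
definition pcnt :: "pstate \<Rightarrow> nat \<Rightarrow> real" where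
  "pcnt S i = sum_list (map (\<lambda>q. if snd q = i then 1 else 0) (pcs S))"
definition Lc :: "pstate \<Rightarrow> nat \<Rightarrow> real" where
  "Lc S k = sum_list (map (\<lambda>q. if lev S (snd q) = k then 1 else 0) (pcs S))"
definition Ek :: "pstate \<Rightarrow> nat \<Rightarrow> nat" where
  "Ek S k = card {i. i < length (boxes S) \<and> lev S i = k \<and> card (chs S i) = 1}"

lemma sum_swap:
  assumes "finite A"
  shows "(\<Sum>k\<in>A. sum_list (map (\<lambda>q. if f q = k then g q else 0) xs)) =
         sum_list (map (\<lambda>q. if f q \<in> A then g q else (0::real)) xs)"
proof (induction xs)
  case Nil then show ?case by simp
next
  case (Cons a xs)
  have "(\<Sum>k\<in>A. sum_list (map (\<lambda>q. if f q = k then g q else 0) (a # xs))) =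
        (\<Sum>k\<in>A. (if f a = k then g a else 0)) + (\<Sum>k\<in>A. sum_list (map (\<lambda>q. if f q = k then g q else 0) xs))"
    by (simp add: sum.distrib)
  also have "(\<Sum>k\<in>A. (if f a = k then g a else 0)) = (if f a \<in> A then g a else 0)"
    using assms by (simp add: sum.delta')
  finally show ?case using Cons by simp
qed

lemma sl_nonneg: "0 \<le> sum_list (map (\<lambda>q. if P q then 1 else (0::real)) xs)"
  by (induction xs) auto

lemma sl_mem: "x \<in> set xs \<Longrightarrow> P x \<Longrightarrow> 1 \<le> sum_list (map (\<lambda>q. if P q then 1 else (0::real)) xs)"
proof (induction xs)
  case Nil then show ?case by simp
next
  case (Cons a xs)
  show ?case
  proof (cases "x = a")
    case True
    then show ?thesis using Cons.prems sl_nonneg[of P xs] by simp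
  next
    case False
    then have "1 \<le> sum_list (map (\<lambda>q. if P q then 1 else (0::real)) xs)" using Cons by simp
    then show ?thesis by simp
  qed
qed

lemma Inv_LI: "Inv ps S \<Longrightarrow> LI S" unfolding Inv_def by (elim conjE)
lemma Inv_PI: "Inv ps S \<Longrightarrow> PI ps S" unfolding Inv_def by (elim conjE)
lemma Inv_EI: "Inv ps S \<Longrightarrow> EI S" unfolding Inv_def by (elim conjE)
lemma Inv_GI: "Inv ps S \<Longrightarrow> GI S" unfolding Inv_def by (elim conjE)

lemma par_info:
  assumes "LI S" "c < length (boxes S)" "bparent S c = Some p"
  shows "p < c" "is_child_type (btype S p) (btype S c)"
  using LI_1[OF assms(1), rule_format, OF assms(2)] assms(3) by simp_all

lemma lev_child:
  assumes "LI S" "c < length (boxes S)" "bparent S c = Some p"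
  shows "lev S c = Suc (lev S p)"
proof -
  obtain x where "btype S c = btype S p @ [x]" using par_info(2)[OF assms] unfolding is_child_type_def by blast
  then show ?thesis unfolding lev_def by simp
qed

lemma lev_root:
  assumes "LI S" "c < length (boxes S)" "bparent S c = None"
  shows "lev S c = 0"
  using LI_1[OF assms(1), rule_format, OF assms(2)] assms(3) unfolding lev_def by simp

lemma pcs_lt:
  assumes "PI ps S" "q \<in> set (pcs S)"
  shows "snd q < length (boxes S)"
proof -
  obtain n where n: "n < length (pcs S)" "pcs S ! n = q" using assms(2) by (auto simp: in_set_conv_nth)
  have a: "length (pcs S) = length ps" using assms(1) unfolding PI_def by (elim conjE)
  have b: "\<forall>k<length ps. snd (pcs S ! k) < length (boxes S)" using assms(1) unfolding PI_def by auto
  show ?thesis using b[rule_format, of n] n a by simp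
qed

lemma R1:
  assumes LI: "LI S"
  shows "real (Nl S (Suc k)) = (\<Sum>i\<in>lvset S k. real (card (chs S i)))"
proof -
  have fin: "finite (lvset S k)" unfolding lvset_def by simp
  have finc: "finite (chs S i)" for i unfolding chs_def by simp
  have eq: "lvset S (Suc k) = (\<Union>i\<in>lvset S k. chs S i)"
  proof (rule set_eqI, rule iffI)
    fix c assume "c \<in> lvset S (Suc k)"
    then have c: "c < length (boxes S)" "lev S c = Suc k" unfolding lvset_def by simp_all
    show "c \<in> (\<Union>i\<in>lvset S k. chs S i)"
    proof (cases "bparent S c")
      case None
      then show ?thesis using lev_root[OF LI c(1)] c by simp
    next
      case (Some p)
      have "p < c" using par_info(1)[OF LI c(1) Some] .
      moreover have "lev S c = Suc (lev S p)" using lev_child[OF LI c(1) Some] .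
      ultimately have "p \<in> lvset S k" using c unfolding lvset_def by simp
      moreover have "c \<in> chs S p" using c Some unfolding chs_def by simp
      ultimately show ?thesis by blast
    qed
  next
    fix c assume "c \<in> (\<Union>i\<in>lvset S k. chs S i)"
    then obtain i where i: "i \<in> lvset S k" "c \<in> chs S i" by blast
    have c: "c < length (boxes S)" "bparent S c = Some i" using i(2) unfolding chs_def by simp_all
    have "lev S c = Suc (lev S i)" using lev_child[OF LI c] .
    then show "c \<in> lvset S (Suc k)" using i(1) c unfolding lvset_def by simp
  qed
  have disj: "\<forall>i\<in>lvset S k. \<forall>j\<in>lvset S k. i \<noteq> j \<longrightarrow> chs S i \<inter> chs S j = {}"
    unfolding chs_def by auto
  have "card (lvset S (Suc k)) = (\<Sum>i\<in>lvset S k. card (chs S i))"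
    unfolding eq by (rule card_UN_disjoint[OF fin]) (use finc disj in auto)
  then show ?thesis unfolding Nl_def by simp
qed

lemma R2:
  assumes PI: "PI ps S"
  shows "(\<Sum>i\<in>lvset S k. pcnt S i) = Lc S k"
proof -
  have fin: "finite (lvset S k)" unfolding lvset_def by simp
  have "(\<Sum>i\<in>lvset S k. pcnt S i) = sum_list (map (\<lambda>q. if snd q \<in> lvset S k then 1 else (0::real)) (pcs S))"
    unfolding pcnt_def using sum_swap[OF fin, of snd "\<lambda>_. 1" "pcs S"] by simp
  also have "\<dots> = Lc S k" unfolding Lc_def
  proof (rule arg_cong[where f = sum_list], rule map_cong[OF refl])
    fix q assume "q \<in> set (pcs S)"
    then have "snd q < length (boxes S)" using pcs_lt[OF PI] by blast
    then show "(if snd q \<in> lvset S k then 1 else 0) = (if lev S (snd q) = k then 1 else (0::real))"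
      unfolding lvset_def by simp
  qed
  finally show ?thesis .
qed

lemma RE: "(\<Sum>i\<in>lvset S k. (if card (chs S i) = 1 then 1 else 0)) = real (Ek S k)"
proof -
  have fin: "finite (lvset S k)" unfolding lvset_def by simp
  have "(\<Sum>i\<in>lvset S k. (if card (chs S i) = 1 then 1 else (0::real))) = (\<Sum>i\<in>{i \<in> lvset S k. card (chs S i) = 1}. 1)"
    using sum.inter_filter[OF fin, of "\<lambda>_. (1::real)" "\<lambda>i. card (chs S i) = 1"] by simp
  also have "\<dots> = real (card {i \<in> lvset S k. card (chs S i) = 1})" by simp
  also have "{i \<in> lvset S k. card (chs S i) = 1} = {i. i < length (boxes S) \<and> lev S i = k \<and> card (chs S i) = 1}"
    unfolding lvset_def by auto
  finally show ?thesis unfolding Ek_def .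
qed

lemma R3:
  assumes I: "Inv ps S" and i: "i < length (boxes S)"
  shows "real (card (chs S i)) \<ge> 2 - 2 * pcnt S i - (if card (chs S i) = 1 then 1 else 0)"
    "real (card (chs S i)) \<ge> 1 - pcnt S i"
proof -
  have pn: "pcnt S i \<ge> 0" unfolding pcnt_def by (rule sl_nonneg)
  have EI: "has_piece S i \<or> haschild S i" using Inv_EI[OF I] i unfolding EI_def by blast
  show "real (card (chs S i)) \<ge> 2 - 2 * pcnt S i - (if card (chs S i) = 1 then 1 else 0)"
    "real (card (chs S i)) \<ge> 1 - pcnt S i"
  proof -
    consider (a) "has_piece S i" | (b) "haschild S i" using EI by blast
    then have "(real (card (chs S i)) \<ge> 2 - 2 * pcnt S i - (if card (chs S i) = 1 then 1 else 0)) \<and>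
      real (card (chs S i)) \<ge> 1 - pcnt S i"
    proof cases
      case a
      then obtain Q where "(Q, i) \<in> set (pcs S)" unfolding has_piece_def by blast
      then have "1 \<le> pcnt S i" unfolding pcnt_def using sl_mem[of "(Q, i)" "pcs S" "\<lambda>q. snd q = i"] by simp
      then show ?thesis by simp
    next
      case b
      then obtain c where "c \<in> chs S i" unfolding haschild_def chs_def by blast
      moreover have "finite (chs S i)" unfolding chs_def by simp
      ultimately have "card (chs S i) \<ge> 1" using card_0_eq[of "chs S i"] by fastforce
      then show ?thesis using pn by auto
    qed
    then show "real (card (chs S i)) \<ge> 2 - 2 * pcnt S i - (if card (chs S i) = 1 then 1 else 0)"
      "real (card (chs S i)) \<ge> 1 - pcnt S i" by simp_all
  qed
qed

lemma Rrec:
  assumes I: "Inv ps S"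
  shows "real (Nl S (Suc k)) \<ge> 2 * real (Nl S k) - 2 * Lc S k - real (Ek S k)"
    "real (Nl S (Suc k)) \<ge> real (Nl S k) - Lc S k"
proof -
  have LI: "LI S" using Inv_LI[OF I] .
  have PI: "PI ps S" using Inv_PI[OF I] .
  have fin: "finite (lvset S k)" unfolding lvset_def by simp
  have lt: "i < length (boxes S)" if "i \<in> lvset S k" for i using that unfolding lvset_def by simp
  have "(\<Sum>i\<in>lvset S k. 2 - 2 * pcnt S i - (if card (chs S i) = 1 then 1 else 0)) \<le> (\<Sum>i\<in>lvset S k. real (card (chs S i)))"
    by (rule sum_mono) (rule R3(1)[OF I lt])
  moreover have "(\<Sum>i\<in>lvset S k. 2 - 2 * pcnt S i - (if card (chs S i) = 1 then 1 else (0::real))) =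
      2 * real (card (lvset S k)) - 2 * (\<Sum>i\<in>lvset S k. pcnt S i) - (\<Sum>i\<in>lvset S k. (if card (chs S i) = 1 then 1 else 0))"
    by (simp add: sum_subtractf sum_distrib_left)
  ultimately show "real (Nl S (Suc k)) \<ge> 2 * real (Nl S k) - 2 * Lc S k - real (Ek S k)"
    using R1[OF LI, of k] R2[OF PI, of k] RE[of S k] unfolding Nl_def by simp
  have "(\<Sum>i\<in>lvset S k. 1 - pcnt S i) \<le> (\<Sum>i\<in>lvset S k. real (card (chs S i)))"
    by (rule sum_mono) (rule R3(2)[OF I lt])
  moreover have "(\<Sum>i\<in>lvset S k. 1 - pcnt S i) = real (card (lvset S k)) - (\<Sum>i\<in>lvset S k. pcnt S i)"
    by (simp add: sum_subtractf)
  ultimately show "real (Nl S (Suc k)) \<ge> real (Nl S k) - Lc S k"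
    using R1[OF LI, of k] R2[OF PI, of k] unfolding Nl_def by simp
qed

lemma R4:
  assumes I: "Inv ps S"
  shows "Ek S k \<le> 3 ^ Suc k"
proof -
  have LI: "LI S" using Inv_LI[OF I] .
  have GI: "\<forall>i i' c c'. single S i c \<longrightarrow> single S i' c' \<longrightarrow> btype S c = btype S c' \<longrightarrow> i = i'"
    using Inv_GI[OF I] unfolding GI_def .
  define E where "E = {i. i < length (boxes S) \<and> lev S i = k \<and> card (chs S i) = 1}"
  define f where "f i = btype S (the_elem (chs S i))" for i
  have sg: "single S i (the_elem (chs S i))" if "i \<in> E" for i
  proof -
    have "card (chs S i) = 1" using that unfolding E_def by simp
    then obtain c where c: "chs S i = {c}" by (rule card_1_singletonE)
    then have te: "the_elem (chs S i) = c" by simp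
    have "c < length (boxes S) \<and> bparent S c = Some i" using c unfolding chs_def by blast
    moreover have "\<forall>c'<length (boxes S). bparent S c' = Some i \<longrightarrow> c' = c"
    proof (intro allI impI)
      fix c' assume "c' < length (boxes S)" "bparent S c' = Some i"
      then have "c' \<in> chs S i" unfolding chs_def by simp
      then show "c' = c" using c by simp
    qed
    ultimately show ?thesis unfolding single_def te by blast
  qed
  have inj: "inj_on f E"
  proof (rule inj_onI)
    fix i i' assume "i \<in> E" "i' \<in> E" "f i = f i'"
    then show "i = i'" using GI sg unfolding f_def by blast
  qed
  have img: "f ` E \<subseteq> {T. set T \<subseteq> {-1, 0, 1} \<and> length T = Suc k}"
  proof
    fix T assume "T \<in> f ` E"
    then obtain i where i: "i \<in> E" "T = f i" by blast
    define c where "c = the_elem (chs S i)"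
    have s: "single S i c" using sg[OF i(1)] unfolding c_def .
    have c1: "c < length (boxes S)" using s unfolding single_def by (elim conjE)
    have c2: "bparent S c = Some i" using s unfolding single_def by (elim conjE)
    note c = c1 c2
    have "valid_type (btype S c)" using LI_1[OF LI, rule_format, OF c(1)] by simp
    moreover have "lev S c = Suc (lev S i)" using lev_child[OF LI c] .
    moreover have "lev S i = k" using i(1) unfolding E_def by simp
    ultimately show "T \<in> {T. set T \<subseteq> {-1, 0, 1} \<and> length T = Suc k}"
      using i(2) unfolding f_def c_def[symmetric] valid_type_def lev_def by simp
  qed
  have "card E \<le> card {T. set T \<subseteq> {-1::int, 0, 1} \<and> length T = Suc k}"
    by (rule card_inj_on_le[OF inj img]) (simp add: finite_lists_length_eq)
  also have "\<dots> = card {-1::int, 0, 1} ^ Suc k" by (rule card_lists_length_eq) simp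
  also have "card {-1::int, 0, 1} = 3" by simp
  finally show ?thesis unfolding Ek_def E_def .
qed


lemma sl_le_len: "sum_list (map (\<lambda>q. if P q then 1 else (0::real)) xs) \<le> real (length xs)"
  by (induction xs) auto

lemma sl_mult: "sum_list (map (\<lambda>q. if P q then 1 else 0) xs) * (c::real) = sum_list (map (\<lambda>q. if P q then c else 0) xs)"
  by (induction xs) (auto simp: algebra_simps)

lemma Lc_nonneg: "0 \<le> Lc S k" unfolding Lc_def by (rule sl_nonneg)

lemma sumLc_le:
  assumes "finite A"
  shows "(\<Sum>k\<in>A. Lc S k) \<le> real (length (pcs S))"
proof -
  have "(\<Sum>k\<in>A. Lc S k) = sum_list (map (\<lambda>q. if lev S (snd q) \<in> A then 1 else (0::real)) (pcs S))"
    unfolding Lc_def using sum_swap[OF assms, of "\<lambda>q. lev S (snd q)" "\<lambda>_. 1" "pcs S"] by simp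
  also have "\<dots> \<le> real (length (pcs S))" by (rule sl_le_len)
  finally show ?thesis .
qed

lemma R5:
  assumes I: "Inv ps S"
  shows "real (Nl S K) \<le> real (length ps)"
proof -
  have down: "real (Nl S K) \<le> real (Nl S (K + j)) + (\<Sum>k\<in>{K..<K + j}. Lc S k)" for j
  proof (induction j)
    case 0 then show ?case by simp
  next
    case (Suc j)
    have "real (Nl S (Suc (K + j))) \<ge> real (Nl S (K + j)) - Lc S (K + j)" by (rule Rrec(2)[OF I])
    moreover have "(\<Sum>k\<in>{K..<K + Suc j}. Lc S k) = (\<Sum>k\<in>{K..<K + j}. Lc S k) + Lc S (K + j)"
      by simp
    ultimately show ?case using Suc by simp
  qed
  define D where "D = Max (insert 0 (lev S ` {..<length (boxes S)}))"
  have levD: "lev S i \<le> D" if "i < length (boxes S)" for i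
    unfolding D_def using that by (intro Max_ge) auto
  have "lvset S (K + Suc D) = {}"
    unfolding lvset_def using levD by fastforce
  then have "Nl S (K + Suc D) = 0" unfolding Nl_def by simp
  then have "real (Nl S K) \<le> (\<Sum>k\<in>{K..<K + Suc D}. Lc S k)" using down[of "Suc D"] by simp
  also have "\<dots> \<le> real (length (pcs S))" by (rule sumLc_le) simp
  also have "length (pcs S) = length ps" using Inv_PI[OF I] unfolding PI_def by (elim conjE)
  finally show ?thesis .
qed

lemma R6:
  assumes I: "Inv ps S"
  shows "real (Nl S 0) \<le> real (Nl S K) / 2 ^ K + (\<Sum>k<K. Lc S k / 2 ^ k + real (Ek S k) / 2 ^ Suc k)"
proof (induction K)
  case 0 then show ?case by simp
next
  case (Suc K)
  have h: "2 * real (Nl S K) \<le> real (Nl S (Suc K)) + 2 * Lc S K + real (Ek S K)"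
    using Rrec(1)[OF I, of K] by simp
  have "real (Nl S K) / 2 ^ K \<le> real (Nl S (Suc K)) / 2 ^ Suc K + (Lc S K / 2 ^ K + real (Ek S K) / 2 ^ Suc K)"
  proof -
    have "real (Nl S K) / 2 ^ K = (2 * real (Nl S K)) / 2 ^ Suc K" by simp
    also have "\<dots> \<le> (real (Nl S (Suc K)) + 2 * Lc S K + real (Ek S K)) / 2 ^ Suc K"
      by (rule divide_right_mono[OF h]) simp
    also have "\<dots> = real (Nl S (Suc K)) / 2 ^ Suc K + (Lc S K / 2 ^ K + real (Ek S K) / 2 ^ Suc K)"
      by (simp add: add_divide_distrib)
    finally show ?thesis .
  qed
  then show ?case using Suc by simp
qed

lemma piece_w:
  assumes I: "Inv ps S" and q: "q \<in> set (pcs S)"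
  shows "1 / 3 ^ lev S (snd q) \<le> 3 * area (fst q)"
proof -
  obtain n where n: "n < length (pcs S)" "pcs S ! n = q" using q by (auto simp: in_set_conv_nth)
  have PI: "PI ps S" using Inv_PI[OF I] .
  have a: "length (pcs S) = length ps" using PI unfolding PI_def by (elim conjE)
  have b: "\<forall>k<length ps. (\<exists>v. fst (pcs S ! k) = transl v (ps ! k)) \<and> snd (pcs S ! k) < length (boxes S) \<and>
       fst (pcs S ! k) \<subseteq> breg S (snd (pcs S ! k)) \<and>
       area (box_type (btype S (snd (pcs S ! k)))) \<le> 6 * area (ps ! k)"
    using PI unfolding PI_def by (elim conjE)
  have f: "(\<exists>v. fst q = transl v (ps ! n)) \<and> area (box_type (btype S (snd q))) \<le> 6 * area (ps ! n)"
    using b[rule_format, of n] n a by simp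
  then obtain v where v: "fst q = transl v (ps ! n)" by blast
  have "area (fst q) = area (ps ! n)" unfolding v transl_def area_def by (rule measure_translation)
  then have "2 / 3 ^ lev S (snd q) \<le> 6 * area (fst q)" using f unfolding area_box_type lev_def by simp
  then show ?thesis by simp
qed

lemma R7:
  assumes I: "Inv ps S"
  shows "(\<Sum>k<K. Lc S k / 2 ^ k) \<le> (3/2) ^ K * (3 * sum_list (map (\<lambda>q. area (fst q)) (pcs S)))"
proof -
  have t1: "Lc S k / 2 ^ k \<le> (3/2) ^ K * (Lc S k / 3 ^ k)" if "k < K" for k
  proof -
    have "Lc S k / 2 ^ k = (3/2) ^ k * (Lc S k / 3 ^ k)" by (simp add: power_divide)
    also have "\<dots> \<le> (3/2) ^ K * (Lc S k / 3 ^ k)"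
      by (rule mult_right_mono) (use that Lc_nonneg in \<open>auto intro: power_increasing\<close>)
    finally show ?thesis .
  qed
  have "(\<Sum>k<K. Lc S k / 2 ^ k) \<le> (\<Sum>k<K. (3/2) ^ K * (Lc S k / 3 ^ k))"
    by (rule sum_mono) (use t1 in simp)
  also have "\<dots> = (3/2) ^ K * (\<Sum>k<K. Lc S k / 3 ^ k)" by (simp add: sum_distrib_left)
  also have "(\<Sum>k<K. Lc S k / 3 ^ k) \<le> 3 * sum_list (map (\<lambda>q. area (fst q)) (pcs S))"
  proof -
    define w :: "(real \<times> real) set \<times> nat \<Rightarrow> real" where "w q = 1 / (3::real) ^ lev S (snd q)" for q
    have e: "Lc S k / 3 ^ k = sum_list (map (\<lambda>q. if lev S (snd q) = k then w q else 0) (pcs S))" for k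
    proof -
      have "Lc S k / 3 ^ k = Lc S k * (1 / 3 ^ k)" by simp
      also have "\<dots> = sum_list (map (\<lambda>q. if lev S (snd q) = k then 1 / 3 ^ k else 0) (pcs S))"
        unfolding Lc_def by (rule sl_mult)
      also have "\<dots> = sum_list (map (\<lambda>q. if lev S (snd q) = k then w q else 0) (pcs S))"
        unfolding w_def by (rule arg_cong[where f = sum_list], rule map_cong[OF refl]) simp
      finally show ?thesis .
    qed
    have "(\<Sum>k<K. Lc S k / 3 ^ k) = sum_list (map (\<lambda>q. if lev S (snd q) \<in> {..<K} then w q else 0) (pcs S))"
      unfolding e by (rule sum_swap) simp
    also have "\<dots> \<le> sum_list (map (\<lambda>q. 3 * area (fst q)) (pcs S))"
    proof (rule sum_list_mono)
      fix q assume q: "q \<in> set (pcs S)"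
      have "w q \<le> 3 * area (fst q)" unfolding w_def by (rule piece_w[OF I q])
      moreover have "0 \<le> area (fst q)" unfolding area_def by simp
      ultimately show "(if lev S (snd q) \<in> {..<K} then w q else 0) \<le> 3 * area (fst q)" by simp
    qed
    also have "\<dots> = 3 * sum_list (map (\<lambda>q. area (fst q)) (pcs S))" by (rule sum_list_const_mult)
    finally show ?thesis .
  qed
  then have "(3/2) ^ K * (\<Sum>k<K. Lc S k / 3 ^ k) \<le> (3/2) ^ K * (3 * sum_list (map (\<lambda>q. area (fst q)) (pcs S)))"
    by (rule mult_left_mono) simp
  finally show ?thesis .
qed

lemma geo: "(\<Sum>k<K. (3/2::real) ^ Suc k) = 3 * ((3/2) ^ K - 1)"
  by (induction K) (simp_all add: algebra_simps)

lemma R8: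
  assumes I: "Inv ps S"
  shows "(\<Sum>k<K. real (Ek S k) / 2 ^ Suc k) \<le> 3 * (3/2) ^ K"
proof -
  have "(\<Sum>k<K. real (Ek S k) / 2 ^ Suc k) \<le> (\<Sum>k<K. (3/2::real) ^ Suc k)"
  proof (rule sum_mono)
    fix k
    have "real (Ek S k) \<le> real (3 ^ Suc k)" using R4[OF I, of k] by (rule of_nat_mono)
    then have "real (Ek S k) \<le> 3 ^ Suc k" by simp
    then have "real (Ek S k) / 2 ^ Suc k \<le> 3 ^ Suc k / 2 ^ Suc k" by (rule divide_right_mono) simp
    then show "real (Ek S k) / 2 ^ Suc k \<le> (3/2) ^ Suc k" by (simp add: power_divide)
  qed
  also have "\<dots> = 3 * ((3/2) ^ K - 1)" by (rule geo)
  finally show ?thesis by simp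
qed

lemma main_bound:
  assumes I: "Inv ps S"
  shows "real (Nl S 0) \<le> real (length ps) / 2 ^ K + (3/2) ^ K * (3 * sum_list (map (\<lambda>q. area (fst q)) (pcs S)) + 3)"
proof -
  have "real (Nl S 0) \<le> real (Nl S K) / 2 ^ K + (\<Sum>k<K. Lc S k / 2 ^ k + real (Ek S k) / 2 ^ Suc k)"
    by (rule R6[OF I])
  also have "(\<Sum>k<K. Lc S k / 2 ^ k + real (Ek S k) / 2 ^ Suc k) =
      (\<Sum>k<K. Lc S k / 2 ^ k) + (\<Sum>k<K. real (Ek S k) / 2 ^ Suc k)" by (rule sum.distrib)
  also have "real (Nl S K) / 2 ^ K \<le> real (length ps) / 2 ^ K"
    by (rule divide_right_mono[OF R5[OF I]]) simp
  finally show ?thesis using R7[OF I, of K] R8[OF I, of K] by (simp add: algebra_simps)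
qed


lemma nbasic_le: assumes "LI S" shows "nbasic S \<le> Nl S 0"
proof -
  have "nbasic S = card {i. i < length (boxes S) \<and> snd (snd (boxes S ! i)) = None}"
    unfolding nbasic_def by (rule length_filter_conv_card)
  also have "\<dots> \<le> card (lvset S 0)"
  proof (rule card_mono)
    show "finite (lvset S 0)" unfolding lvset_def by simp
    show "{i. i < length (boxes S) \<and> snd (snd (boxes S ! i)) = None} \<subseteq> lvset S 0"
    proof
      fix i assume "i \<in> {i. i < length (boxes S) \<and> snd (snd (boxes S ! i)) = None}"
      then have i: "i < length (boxes S)" "bparent S i = None" unfolding bparent_def by simp_all
      show "i \<in> lvset S 0" using lev_root[OF assms i] i unfolding lvset_def by simp
    qed
  qed
  finally show ?thesis unfolding Nl_def .
qed

lemma hpar1_pts: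
  assumes "is_hpar1 P"
  shows "\<exists>a b w. w > 0 \<and> (a, b) \<in> P \<and> (a + w, b) \<in> P"
proof -
  obtain a b w s where w: "w > 0" and P: "P = {(x, y). b \<le> y \<and> y \<le> b + 1 \<and> a + s * (y - b) \<le> x \<and> x \<le> a + s * (y - b) + w}"
    using assms unfolding is_hpar1_def by blast
  have "(a, b) \<in> P" "(a + w, b) \<in> P" using w unfolding P by auto
  then show ?thesis using w by blast
qed

lemma occ_bounds:
  assumes I: "Inv ps S" and ne: "ps \<noteq> []" and hp: "\<forall>P\<in>set ps. is_hpar1 P"
  shows "0 < occ_right S" "occ_right S \<le> 2 * real (nbasic S)"
proof -
  have LI: "LI S" using Inv_LI[OF I] .
  have PI: "PI ps S" using Inv_PI[OF I] .
  have a: "length (pcs S) = length ps" using PI unfolding PI_def by (elim conjE)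
  have b: "\<forall>k<length ps. (\<exists>v. fst (pcs S ! k) = transl v (ps ! k)) \<and> snd (pcs S ! k) < length (boxes S) \<and>
       fst (pcs S ! k) \<subseteq> breg S (snd (pcs S ! k)) \<and>
       area (box_type (btype S (snd (pcs S ! k)))) \<le> 6 * area (ps ! k)"
    using PI unfolding PI_def by (elim conjE)
  define M where "M = 2 * real (nbasic S)"
  define g where "g Q = (SUP p\<in>Q. fst p)" for Q :: "(real \<times> real) set"
  have inb: "Q \<subseteq> {p. 0 \<le> fst p \<and> fst p \<le> M}" if Qin: "Q \<in> set (placed S)" for Q
  proof -
    obtain k where k: "k < length (pcs S)" "Q = fst (pcs S ! k)" using Qin unfolding placed_def
      by (auto simp: in_set_conv_nth)
    have f: "snd (pcs S ! k) < length (boxes S) \<and> fst (pcs S ! k) \<subseteq> breg S (snd (pcs S ! k))"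
      using b[rule_format, of k] k a by simp
    have "breg S (snd (pcs S ! k)) \<subseteq> {p. 0 \<le> fst p \<and> fst p \<le> M}"
      using LI_2[OF LI, rule_format, of "snd (pcs S ! k)"] f unfolding M_def by simp
    then show ?thesis using f k by blast
  qed
  have pts: "\<exists>z w. w > 0 \<and> z \<in> Q \<and> (fst z + w, snd z) \<in> Q" if Qin: "Q \<in> set (placed S)" for Q
  proof -
    obtain k where k: "k < length (pcs S)" "Q = fst (pcs S ! k)" using Qin unfolding placed_def
      by (auto simp: in_set_conv_nth)
    obtain v where v: "Q = transl v (ps ! k)" using b[rule_format, of k] k a by auto
    have "ps ! k \<in> set ps" using k a by simp
    then have "is_hpar1 (ps ! k)" using hp by blast
    then obtain x y w where w: "w > 0" "(x, y) \<in> ps ! k" "(x + w, y) \<in> ps ! k" using hpar1_pts by blast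
    have "v + (x, y) \<in> Q" "v + (x + w, y) \<in> Q" unfolding v transl_def using w by auto
    moreover have "v + (x + w, y) = (fst (v + (x, y)) + w, snd (v + (x, y)))" by (cases v) simp
    ultimately show ?thesis using w(1) by metis
  qed
  have gle: "g Q \<le> M" if Qin: "Q \<in> set (placed S)" for Q
  proof -
    obtain z w where "z \<in> Q" using pts[OF Qin] by blast
    then have "Q \<noteq> {}" by blast
    then show ?thesis unfolding g_def by (rule cSUP_least) (use inb[OF Qin] in auto)
  qed
  have ggt: "0 < g Q" if Qin: "Q \<in> set (placed S)" for Q
  proof -
    obtain z w where zw: "w > 0" "z \<in> Q" "(fst z + w, snd z) \<in> Q" using pts[OF Qin] by blast
    have bdd: "bdd_above (fst ` Q)" by (rule bdd_aboveI[of _ M]) (use inb[OF Qin] in auto)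
    have "fst (fst z + w, snd z) \<le> g Q" unfolding g_def by (rule cSUP_upper[OF zw(3) bdd])
    moreover have "0 \<le> fst z" using inb[OF Qin] zw(2) by auto
    ultimately show ?thesis using zw(1) by simp
  qed
  have fin: "finite (g ` set (placed S))" by simp
  have nep: "set (placed S) \<noteq> {}" using a ne unfolding placed_def by auto
  have occ: "occ_right S = Max (g ` set (placed S))" unfolding occ_right_def g_def ..
  obtain Q0 where Q0: "Q0 \<in> set (placed S)" using ex_in_conv[of "set (placed S)"] nep by blast
  have "g Q0 \<le> occ_right S" unfolding occ using fin Q0 by (intro Max_ge) auto
  then show "0 < occ_right S" using ggt[OF Q0] by simp
  show "occ_right S \<le> 2 * real (nbasic S)" unfolding occ M_def[symmetric]
    using fin nep gle by (subst Max_le_iff) auto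
qed

lemma area_occ: "0 \<le> occ_right S \<Longrightarrow> area (occupied S) = occ_right S"
proof -
  assume h: "0 \<le> occ_right S"
  have "occupied S = hpar 0 (occ_right S) 0" unfolding occupied_def hpar_def by auto
  then show ?thesis using area_hpar[OF h] by simp
qed

lemma area_sum:
  assumes I: "Inv ps S"
  shows "sum_list (map area (placed S)) = sum_list (map area ps)"
    "sum_list (map (\<lambda>q. area (fst q)) (pcs S)) = sum_list (map area ps)"
proof -
  have PI: "PI ps S" using Inv_PI[OF I] .
  have a: "length (pcs S) = length ps" using PI unfolding PI_def by (elim conjE)
  have b: "\<forall>k<length ps. (\<exists>v. fst (pcs S ! k) = transl v (ps ! k)) \<and> snd (pcs S ! k) < length (boxes S) \<and>
       fst (pcs S ! k) \<subseteq> breg S (snd (pcs S ! k)) \<and>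
       area (box_type (btype S (snd (pcs S ! k)))) \<le> 6 * area (ps ! k)"
    using PI unfolding PI_def by (elim conjE)
  have e: "map (\<lambda>q. area (fst q)) (pcs S) = map area ps"
  proof (rule nth_equalityI)
    show "length (map (\<lambda>q. area (fst q)) (pcs S)) = length (map area ps)" using a by simp
    fix k assume "k < length (map (\<lambda>q. area (fst q)) (pcs S))"
    then have k: "k < length ps" using a by simp
    obtain v where v: "fst (pcs S ! k) = transl v (ps ! k)" using b[rule_format, OF k] by blast
    have "area (fst (pcs S ! k)) = area (ps ! k)" unfolding v transl_def area_def by (rule measure_translation)
    then show "map (\<lambda>q. area (fst q)) (pcs S) ! k = map area ps ! k" using k a by simp
  qed
  then show "sum_list (map (\<lambda>q. area (fst q)) (pcs S)) = sum_list (map area ps)" by simp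
  have "map area (placed S) = map (\<lambda>q. area (fst q)) (pcs S)" unfolding placed_def by simp
  then show "sum_list (map area (placed S)) = sum_list (map area ps)" using e by simp
qed

lemma pow_bound:
  assumes n: "(n::nat) \<ge> 1"
  defines "K \<equiv> nat \<lceil>log 2 (real n)\<rceil>"
  shows "real n \<le> 2 ^ K" "(3/2::real) ^ K \<le> (3/2) * real n powr (log 2 3 - 1)"
proof -
  have n0: "real n > 0" using n by simp
  have lg0: "log 2 (real n) \<ge> 0" using n by simp
  have K1: "real K \<ge> log 2 (real n)" unfolding K_def using lg0 by linarith
  have K2: "real K \<le> log 2 (real n) + 1" unfolding K_def using lg0 by linarith
  have "real n = 2 powr (log 2 (real n))" using n0 by simp
  also have "\<dots> \<le> 2 powr (real K)" using K1 by (intro powr_mono) simp_all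
  also have "\<dots> = 2 ^ K" by (simp add: powr_realpow)
  finally show "real n \<le> 2 ^ K" .
  have "(3/2::real) ^ K = (3/2) powr (real K)" by (simp add: powr_realpow)
  also have "\<dots> \<le> (3/2) powr (log 2 (real n) + 1)" using K2 by (intro powr_mono) simp_all
  also have "\<dots> = (3/2) * (3/2) powr (log 2 (real n))" by (simp add: powr_add)
  also have "(3/2::real) powr (log 2 (real n)) = real n powr (log 2 3 - 1)"
  proof -
    have l: "log 2 3 - 1 = log 2 (3/2)" by (simp add: log_divide)
    have "(3/2::real) powr (log 2 (real n)) = exp (log 2 (real n) * ln (3/2))" by (simp add: powr_def)
    also have "\<dots> = exp (log 2 (3/2) * ln (real n))" unfolding log_def by (simp add: field_simps)
    also have "\<dots> = real n powr (log 2 (3/2))" using n0 by (simp add: powr_def)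
    finally show ?thesis using l by simp
  qed
  finally show "(3/2::real) ^ K \<le> (3/2) * real n powr (log 2 3 - 1)" .
qed

theorem lemma18:
  shows "\<exists>c > 0. \<exists>N. \<forall>n \<ge> N. \<forall>ps S.
           length ps = n \<longrightarrow>
           (\<forall>P \<in> set ps. is_hpar1 P \<and> width P \<le> 1) \<longrightarrow>
           sum_list (map area ps) \<ge> 1 \<longrightarrow>
           packs ps S \<longrightarrow>
           pack_density S \<ge> c * real n powr (1 - log 2 3) / log 2 (real n)"
proof (intro exI[of _ "1/20"] conjI allI impI exI[of _ "2::nat"])
  show "(0::real) < 1/20" by simp
  fix n :: nat and ps S
  assume n2: "2 \<le> n" and len: "length ps = n" and hp0: "\<forall>P \<in> set ps. is_hpar1 P \<and> width P \<le> 1"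
    and A1: "sum_list (map area ps) \<ge> 1" and pk: "packs ps S"
  have I: "Inv ps S" using packs_Inv[OF pk] .
  have hp: "\<forall>P\<in>set ps. is_hpar1 P" using hp0 by blast
  have ne: "ps \<noteq> []" using len n2 by auto
  define A where "A = sum_list (map area ps)"
  define R where "R = occ_right S"
  define B where "B = real (Nl S 0)"
  define al where "al = log 2 3 - 1"
  define K where "K = nat \<lceil>log 2 (real n)\<rceil>"
  have R0: "0 < R" and RB: "R \<le> 2 * real (nbasic S)" using occ_bounds[OF I ne hp] unfolding R_def by simp_all
  have nbB: "real (nbasic S) \<le> B" unfolding B_def using nbasic_le[OF Inv_LI[OF I]] by simp
  have dens: "pack_density S = A / R"
    unfolding pack_density_def A_def R_def using area_sum(1)[OF I] area_occ[of S] R0 R_def by simp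
  have n1: "n \<ge> 1" using n2 by simp
  have pb1: "real n \<le> 2 ^ K" and pb2: "(3/2::real) ^ K \<le> (3/2) * real n powr al"
    using pow_bound[OF n1] unfolding K_def al_def by simp_all
  have mb: "B \<le> real n / 2 ^ K + (3/2) ^ K * (3 * A + 3)"
    using main_bound[OF I, of K] area_sum(2)[OF I] len unfolding B_def A_def by simp
  have al0: "al \<ge> 0" unfolding al_def by simp
  have np: "real n powr al \<ge> 1" using n1 al0 by (simp add: ge_one_powr_ge_zero)
  have A1': "A \<ge> 1" using A1 unfolding A_def .
  have "real n / 2 ^ K \<le> 1" using pb1 by simp
  moreover have "(3/2) ^ K * (3 * A + 3) \<le> ((3/2) * real n powr al) * (3 * A + 3)"
    by (rule mult_right_mono[OF pb2]) (use A1' in simp)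
  ultimately have "B \<le> 1 + (3/2) * real n powr al * (3 * A + 3)" using mb by linarith
  also have "\<dots> \<le> 10 * A * real n powr al"
  proof -
    have "1 * 1 \<le> A * real n powr al" using mult_mono[OF A1' np] A1' by simp
    then have "1 \<le> A * real n powr al" by simp
    moreover have "1 * real n powr al \<le> A * real n powr al" using mult_right_mono[OF A1', of "real n powr al"] np by simp
    moreover have "1 + (3/2) * real n powr al * (3 * A + 3) = 1 + 9/2 * (A * real n powr al) + 9/2 * real n powr al"
      by (simp add: algebra_simps)
    moreover have "10 * A * real n powr al = 10 * (A * real n powr al)" by simp
    ultimately show ?thesis by linarith
  qed
  finally have B10: "B \<le> 10 * A * real n powr al" .
  have Apos: "A > 0" using A1' by simp
  have "A / R \<ge> A / (2 * B)"
  proof (rule divide_left_mono)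
    show "R \<le> 2 * B" using RB nbB by simp
    show "0 \<le> A" using Apos by simp
    show "0 < 2 * B * R" using R0 RB nbB by (simp add: mult_pos_pos)
  qed
  moreover have "A / (2 * B) \<ge> A / (20 * A * real n powr al)"
  proof (rule divide_left_mono)
    show "2 * B \<le> 20 * A * real n powr al" using B10 by simp
    show "0 \<le> A" using Apos by simp
    have "B > 0" using R0 RB nbB by simp
    moreover have "0 < real n powr al" using np by linarith
    ultimately show "0 < (20 * A * real n powr al) * (2 * B)" using Apos by (intro mult_pos_pos) simp_all
  qed
  moreover have "A / (20 * A * real n powr al) = 1 / (20 * real n powr al)" using Apos by simp
  ultimately have D: "pack_density S \<ge> 1 / (20 * real n powr al)" using dens by simp
  have lg: "log 2 (real n) \<ge> 1" using n2 by simp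
  have e: "real n powr (1 - log 2 3) = 1 / real n powr al"
    unfolding al_def using n1 by (simp add: powr_minus_divide[symmetric])
  have "1/20 * real n powr (1 - log 2 3) / log 2 (real n) \<le> 1/20 * real n powr (1 - log 2 3)"
  proof -
    have "0 \<le> 1/20 * real n powr (1 - log 2 3)" by simp
    then have "1/20 * real n powr (1 - log 2 3) / log 2 (real n) \<le> 1/20 * real n powr (1 - log 2 3) / 1"
      using lg by (intro divide_left_mono) simp_all
    then show ?thesis by simp
  qed
  also have "\<dots> = 1 / (20 * real n powr al)" unfolding e by simp
  finally show "1/20 * real n powr (1 - log 2 3) / log 2 (real n) \<le> pack_density S" using D by simp
qed


end
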